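(* Let $R$ be a P$v$MD, $x$ a nonzero element of $R$, $P$ a prime ideal minimal over $xR$, and $I=xR_P\cap R$. Then (1) $I$ is a $w$-ideal of $R$ (i.e. $I_w=I$); (2) $xR+I^2$ is a $w$-reduction of $I$; (3) if $I$ is $w$-basic, then $P$ is a maximal $t$-ideal of $R$.
   Context: For a domain $R$ with quotient field $K$ and nonzero fractional ideal $I$: $I^{-1}=(R:I)=\{x\in K:xI\subseteq R\}$, $I_v=(I^{-1})^{-1}$, $I_t=\bigcup J_v$ over finitely generated subideals $J\subseteq I$; a maximal $t$-ideal is an ideal maximal among proper integral ideals $Q$ with $Q_t=Q$. The $w$-operation is $I_w=\bigcup(I:J)$ over finitely generated ideals $J$ with $J_v=R$ (equivalently $I_w=\bigcap_M IR_M$ over maximal $t$-ideals $M$). $R$ is a P$v$MD if every nonzero finitely generated ideal $I$ satisfies $(II^{-1})_t=R$ (equivalently $R_M$ is a valuation domain for each maximal $t$-ideal $M$). For a nonzero ideal $I$, an ideal $J\subseteq I$ is a $w$-reduction of $I$ if $(JI^n)_w=(I^{n+1})_w$ for some integer $n\ge0$; $I$ is $w$-basic if every $w$-reduction $J$ of $I$ satisfies $J_w=I_w$. *)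

theory Defs
  imports "HOL-Computational_Algebra.Fraction_Field"
begin

text \<open>The domain R is the whole type 'a (an integral domain, class idom);
its quotient field K is 'a fract. All (fractional) ideals are subsets of K;
integral ideals are subsets of the image Rs of R in K.\<close>

definition emb :: "'a::idom \<Rightarrow> 'a fract" where
  "emb a = Fract a 1"

definition Rs :: "'a::idom fract set" where
  "Rs = range emb"

definition integral_ideal :: "'a::idom fract set \<Rightarrow> bool" where
  "integral_ideal Q \<longleftrightarrow> Q \<subseteq> Rs \<and> 0 \<in> Q \<and> (\<forall>a\<in>Q. \<forall>b\<in>Q. a + b \<in> Q)
      \<and> (\<forall>r\<in>Rs. \<forall>a\<in>Q. r * a \<in> Q)"

definition prime_ideal :: "'a::idom fract set \<Rightarrow> bool" where
  "prime_ideal P \<longleftrightarrow> integral_ideal P \<and> P \<noteq> Rs \<and>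
      (\<forall>a\<in>Rs. \<forall>b\<in>Rs. a * b \<in> P \<longrightarrow> a \<in> P \<or> b \<in> P)"

definition pideal :: "'a::idom \<Rightarrow> 'a fract set" where
  "pideal x = (\<lambda>r. emb x * r) ` Rs"

definition minimal_prime_over :: "'a::idom fract set \<Rightarrow> 'a fract set \<Rightarrow> bool" where
  "minimal_prime_over P A \<longleftrightarrow> prime_ideal P \<and> A \<subseteq> P \<and>
      (\<forall>Q. prime_ideal Q \<and> A \<subseteq> Q \<and> Q \<subseteq> P \<longrightarrow> Q = P)"

definition localization :: "'a::idom fract set \<Rightarrow> 'a fract set" where
  "localization P = {a / s | a s. a \<in> Rs \<and> s \<in> Rs \<and> s \<notin> P}"

definition iprod :: "'a::idom fract set \<Rightarrow> 'a fract set \<Rightarrow> 'a fract set" where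
  "iprod A B = {\<Sum>i<n. a i * b i | (n::nat) a b. \<forall>i<n. a i \<in> A \<and> b i \<in> B}"

definition iadd :: "'a::idom fract set \<Rightarrow> 'a fract set \<Rightarrow> 'a fract set" where
  "iadd A B = {a + b | a b. a \<in> A \<and> b \<in> B}"

fun ipow :: "'a::idom fract set \<Rightarrow> nat \<Rightarrow> 'a fract set" where
  "ipow I 0 = Rs"
| "ipow I (Suc n) = iprod I (ipow I n)"

definition fgen :: "'a::idom fract set \<Rightarrow> 'a fract set" where
  "fgen F = {\<Sum>f\<in>F. r f * f | r. \<forall>f\<in>F. r f \<in> Rs}"

definition colon :: "'a::idom fract set \<Rightarrow> 'a fract set \<Rightarrow> 'a fract set" where
  "colon A B = {x. \<forall>b\<in>B. x * b \<in> A}"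

definition finv :: "'a::idom fract set \<Rightarrow> 'a fract set" where
  "finv I = colon Rs I"

definition vop :: "'a::idom fract set \<Rightarrow> 'a fract set" where
  "vop I = finv (finv I)"

definition tclos :: "'a::idom fract set \<Rightarrow> 'a fract set" where
  "tclos I = \<Union> {vop (fgen F) | F. finite F \<and> F \<subseteq> I}"

definition wop :: "'a::idom fract set \<Rightarrow> 'a fract set" where
  "wop I = \<Union> {colon I (fgen F) | F. finite F \<and> F \<subseteq> Rs \<and> vop (fgen F) = Rs}"

definition max_t_ideal :: "'a::idom fract set \<Rightarrow> bool" where
  "max_t_ideal Q \<longleftrightarrow> integral_ideal Q \<and> Q \<noteq> Rs \<and> tclos Q = Q \<and>
     (\<forall>Q'. integral_ideal Q' \<and> Q' \<noteq> Rs \<and> tclos Q' = Q' \<and> Q \<subseteq> Q' \<longrightarrow> Q' = Q)"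

definition PvMD :: "'a::idom itself \<Rightarrow> bool" where
  "PvMD _ \<longleftrightarrow> (\<forall>F::'a fract set. finite F \<and> F \<subseteq> Rs \<and> fgen F \<noteq> {0} \<longrightarrow>
      tclos (iprod (fgen F) (finv (fgen F))) = Rs)"

definition w_reduction :: "'a::idom fract set \<Rightarrow> 'a fract set \<Rightarrow> bool" where
  "w_reduction J I \<longleftrightarrow> integral_ideal J \<and> J \<subseteq> I \<and>
      (\<exists>n. wop (iprod J (ipow I n)) = wop (ipow I (Suc n)))"

definition w_basic :: "'a::idom fract set \<Rightarrow> bool" where
  "w_basic I \<longleftrightarrow> (\<forall>J. w_reduction J I \<longrightarrow> wop J = wop I)"

end

theory Submission
  imports Defs
begin

lemma Rs_0[simp]: "0 \<in> Rs" unfolding Rs_def emb_def by (rule range_eqI[of _ _ 0]) (simp add: Zero_fract_def)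
lemma Rs_1[simp]: "1 \<in> Rs" unfolding Rs_def emb_def by (rule range_eqI[of _ _ 1]) (simp add: One_fract_def)
lemma emb_add: "emb (a + b) = emb a + emb b" unfolding emb_def by simp
lemma emb_mult: "emb (a * b) = emb a * emb b" unfolding emb_def by simp
lemma emb_uminus: "emb (- a) = - emb a" unfolding emb_def by simp
lemma Rs_add[intro]: "a \<in> Rs \<Longrightarrow> b \<in> Rs \<Longrightarrow> a + b \<in> Rs"
proof -
  assume "a \<in> Rs" "b \<in> Rs"
  then obtain c d where "a = emb c" "b = emb d" unfolding Rs_def by auto
  then show ?thesis unfolding Rs_def by (simp add: emb_add[symmetric])
qed
lemma Rs_mult[intro]: "a \<in> Rs \<Longrightarrow> b \<in> Rs \<Longrightarrow> a * b \<in> Rs"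
proof -
  assume "a \<in> Rs" "b \<in> Rs"
  then obtain c d where "a = emb c" "b = emb d" unfolding Rs_def by auto
  then show ?thesis unfolding Rs_def by (simp add: emb_mult[symmetric])
qed
lemma Rs_uminus[intro]: "a \<in> Rs \<Longrightarrow> - a \<in> Rs"
proof -
  assume "a \<in> Rs"
  then obtain c where "a = emb c" unfolding Rs_def by auto
  then show ?thesis unfolding Rs_def by (simp add: emb_uminus[symmetric])
qed
lemma Rs_diff[intro]: "a \<in> Rs \<Longrightarrow> b \<in> Rs \<Longrightarrow> a - b \<in> Rs"
  using Rs_add[of a "-b"] Rs_uminus[of b] by simp
lemma Rs_pow[intro]: "a \<in> Rs \<Longrightarrow> a ^ n \<in> Rs"
  by (induct n) auto
lemma emb_Rs[simp]: "emb a \<in> Rs" unfolding Rs_def by simp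
lemma emb_nz: "a \<noteq> 0 \<Longrightarrow> emb a \<noteq> 0" unfolding emb_def by (simp add: Zero_fract_def eq_fract)

definition modl :: "'a::idom fract set \<Rightarrow> bool" where
  "modl S \<longleftrightarrow> 0 \<in> S \<and> (\<forall>a\<in>S. \<forall>b\<in>S. a + b \<in> S) \<and> (\<forall>r\<in>Rs. \<forall>a\<in>S. r * a \<in> S)"

lemma modlI: "0 \<in> S \<Longrightarrow> (\<And>a b. a \<in> S \<Longrightarrow> b \<in> S \<Longrightarrow> a + b \<in> S) \<Longrightarrow> (\<And>r a. r \<in> Rs \<Longrightarrow> a \<in> S \<Longrightarrow> r * a \<in> S) \<Longrightarrow> modl S"
  unfolding modl_def by blast
lemma modl_0: "modl S \<Longrightarrow> 0 \<in> S" unfolding modl_def by blast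
lemma modl_add: "modl S \<Longrightarrow> a \<in> S \<Longrightarrow> b \<in> S \<Longrightarrow> a + b \<in> S" unfolding modl_def by blast
lemma modl_smult: "modl S \<Longrightarrow> r \<in> Rs \<Longrightarrow> a \<in> S \<Longrightarrow> r * a \<in> S" unfolding modl_def by blast
lemma modl_smult2: "modl S \<Longrightarrow> r \<in> Rs \<Longrightarrow> a \<in> S \<Longrightarrow> a * r \<in> S" using modl_smult[of S r a] by (simp add: mult.commute)
lemma modl_uminus: "modl S \<Longrightarrow> a \<in> S \<Longrightarrow> - a \<in> S" using modl_smult[of S "-1" a] Rs_uminus[OF Rs_1] by simp
lemma modl_diff: "modl S \<Longrightarrow> a \<in> S \<Longrightarrow> b \<in> S \<Longrightarrow> a - b \<in> S"
  using modl_add[of S a "-b"] modl_uminus[of S b] by simp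
lemma modl_sum0: assumes "modl S" "finite A" shows "(\<forall>i\<in>A. f i \<in> S) \<longrightarrow> sum f A \<in> S"
  using assms(2) by (induct A rule: finite_induct) (auto intro: modl_0[OF assms(1)] modl_add[OF assms(1)])
lemma modl_sum: "modl S \<Longrightarrow> finite A \<Longrightarrow> (\<And>i. i \<in> A \<Longrightarrow> f i \<in> S) \<Longrightarrow> sum f A \<in> S"
  using modl_sum0[of S A f] by blast
lemma modl_Rs[simp]: "modl Rs" by (rule modlI) auto

lemma integral_ideal_iff: "integral_ideal Q \<longleftrightarrow> Q \<subseteq> Rs \<and> modl Q"
  unfolding integral_ideal_def modl_def by blast

lemma fgen_modl: "finite F \<Longrightarrow> modl (fgen F)"
proof (rule modlI)
  show "0 \<in> fgen F" unfolding fgen_def by (rule CollectI, rule exI[of _ "\<lambda>_. 0"]) simp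
  fix a b assume "a \<in> fgen F" "b \<in> fgen F"
  then obtain r r' where a: "a = (\<Sum>f\<in>F. r f * f)" "\<forall>f\<in>F. r f \<in> Rs"
    and b: "b = (\<Sum>f\<in>F. r' f * f)" "\<forall>f\<in>F. r' f \<in> Rs" unfolding fgen_def by blast
  have "a + b = (\<Sum>f\<in>F. (r f + r' f) * f)" using a b by (simp add: sum.distrib distrib_right)
  then show "a + b \<in> fgen F" unfolding fgen_def using a b by (intro CollectI exI[of _ "\<lambda>f. r f + r' f"]) auto
next
  fix c a :: "'a fract" assume c: "c \<in> Rs" and "a \<in> fgen F"
  then obtain r where a: "a = (\<Sum>f\<in>F. r f * f)" "\<forall>f\<in>F. r f \<in> Rs" unfolding fgen_def by blast
  have "c * a = (\<Sum>f\<in>F. (c * r f) * f)" using a by (simp add: sum_distrib_left mult.assoc)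
  then show "c * a \<in> fgen F" unfolding fgen_def using a c by (intro CollectI exI[of _ "\<lambda>f. c * r f"]) auto
qed

lemma fgen_sub: "finite F \<Longrightarrow> F \<subseteq> fgen F"
proof
  fix g assume "finite F" "g \<in> F"
  have "(\<Sum>f\<in>F. (if f = g then 1 else 0) * f) = (\<Sum>f\<in>F. if f = g then f else 0)"
    by (rule sum.cong) auto
  also have "\<dots> = g" using \<open>finite F\<close> \<open>g \<in> F\<close> by (simp add: sum.delta)
  finally have "(\<Sum>f\<in>F. (if f = g then 1 else 0) * f) = g" .
  then show "g \<in> fgen F" unfolding fgen_def by (intro CollectI exI[of _ "\<lambda>f. if f = g then 1 else 0"]) auto
qed

lemma fgen_least: "finite F \<Longrightarrow> modl S \<Longrightarrow> F \<subseteq> S \<Longrightarrow> fgen F \<subseteq> S"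
  unfolding fgen_def by (auto intro!: modl_sum modl_smult)

lemma fgen_Rs: "finite F \<Longrightarrow> F \<subseteq> Rs \<Longrightarrow> fgen F \<subseteq> Rs"
  by (rule fgen_least) auto

lemma colon_modl: "modl S \<Longrightarrow> modl (colon S X)"
  unfolding colon_def by (rule modlI) (auto simp: distrib_right mult.assoc intro: modl_0 modl_add modl_smult)

lemma finv_fgen: "finite F \<Longrightarrow> c \<in> finv (fgen F) \<longleftrightarrow> (\<forall>f\<in>F. c * f \<in> Rs)"
proof
  assume "finite F" "c \<in> finv (fgen F)" then show "\<forall>f\<in>F. c * f \<in> Rs"
    using fgen_sub unfolding finv_def colon_def by blast
next
  assume F: "finite F" and h: "\<forall>f\<in>F. c * f \<in> Rs"
  have "modl {z. c * z \<in> Rs}" by (rule modlI) (auto simp: distrib_left mult.left_commute)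
  then have "fgen F \<subseteq> {z. c * z \<in> Rs}" using F h by (intro fgen_least) auto
  then show "c \<in> finv (fgen F)" unfolding finv_def colon_def by auto
qed

lemma vop_fgen: "finite F \<Longrightarrow> y \<in> vop (fgen F) \<longleftrightarrow> (\<forall>c. (\<forall>f\<in>F. c * f \<in> Rs) \<longrightarrow> c * y \<in> Rs)"
proof -
  assume F: "finite F"
  have "y \<in> vop (fgen F) \<longleftrightarrow> (\<forall>c\<in>finv (fgen F). y * c \<in> Rs)"
    unfolding vop_def by (simp add: finv_def[of "finv _"] colon_def)
  also have "\<dots> \<longleftrightarrow> (\<forall>c. (\<forall>f\<in>F. c * f \<in> Rs) \<longrightarrow> c * y \<in> Rs)"
    using F by (auto simp: finv_fgen[OF F] mult.commute)
  finally show ?thesis .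
qed

definition setprod :: "'a::idom fract set \<Rightarrow> 'a fract set \<Rightarrow> 'a fract set" where
  "setprod A B = (\<lambda>(a,b). a * b) ` (A \<times> B)"

lemma setprod_finite: "finite A \<Longrightarrow> finite B \<Longrightarrow> finite (setprod A B)"
  unfolding setprod_def by auto
lemma setprod_mem: "a \<in> A \<Longrightarrow> b \<in> B \<Longrightarrow> a * b \<in> setprod A B"
  unfolding setprod_def by force
lemma setprod_E: "e \<in> setprod A B \<Longrightarrow> (\<And>a b. a \<in> A \<Longrightarrow> b \<in> B \<Longrightarrow> e = a * b \<Longrightarrow> thesis) \<Longrightarrow> thesis"
  unfolding setprod_def by auto

lemma vop_mult:
  assumes A: "finite A" and B: "finite B" and y1: "y1 \<in> vop (fgen A)" and y2: "y2 \<in> vop (fgen B)"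
  shows "y1 * y2 \<in> vop (fgen (setprod A B))"
proof -
  have AB: "finite (setprod A B)" using A B by (rule setprod_finite)
  show ?thesis unfolding vop_fgen[OF AB]
  proof (intro allI impI)
    fix c assume h: "\<forall>f\<in>setprod A B. c * f \<in> Rs"
    have "\<forall>a\<in>A. (c * y2) * a \<in> Rs"
    proof
      fix a assume a: "a \<in> A"
      have "\<forall>b\<in>B. (c * a) * b \<in> Rs" using h setprod_mem[OF a] by (simp add: mult.assoc)
      then have "(c * a) * y2 \<in> Rs" using y2 unfolding vop_fgen[OF B] by blast
      then show "(c * y2) * a \<in> Rs" by (simp add: ac_simps)
    qed
    then have "(c * y2) * y1 \<in> Rs" using y1 unfolding vop_fgen[OF A] by blast
    then show "c * (y1 * y2) \<in> Rs" by (simp add: ac_simps)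
  qed
qed

lemma vop_mono:
  assumes A: "finite A" and B: "finite B" and sub: "A \<subseteq> fgen B"
  shows "vop (fgen A) \<subseteq> vop (fgen B)"
proof
  fix y assume y: "y \<in> vop (fgen A)"
  show "y \<in> vop (fgen B)" unfolding vop_fgen[OF B]
  proof (intro allI impI)
    fix c assume "\<forall>f\<in>B. c * f \<in> Rs"
    then have "c \<in> finv (fgen B)" using finv_fgen[OF B] by blast
    then have "\<forall>f\<in>A. c * f \<in> Rs" using sub unfolding finv_def colon_def by blast
    then show "c * y \<in> Rs" using y unfolding vop_fgen[OF A] by blast
  qed
qed

lemma vop_smult:
  assumes A: "finite A" and y: "y \<in> vop (fgen A)"
  shows "s * y \<in> vop (fgen ((\<lambda>a. s * a) ` A))"
proof -
  have A': "finite ((\<lambda>a. s * a) ` A)" using A by simp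
  show ?thesis unfolding vop_fgen[OF A']
  proof (intro allI impI)
    fix c assume "\<forall>f\<in>(\<lambda>a. s * a) ` A. c * f \<in> Rs"
    then have "\<forall>f\<in>A. (c * s) * f \<in> Rs" by (simp add: mult.assoc)
    then have "(c * s) * y \<in> Rs" using y unfolding vop_fgen[OF A] by blast
    then show "c * (s * y) \<in> Rs" by (simp add: mult.assoc)
  qed
qed

lemma vop_sub_Rs: "finite A \<Longrightarrow> A \<subseteq> Rs \<Longrightarrow> vop (fgen A) \<subseteq> Rs"
proof
  fix y assume "finite A" "A \<subseteq> Rs" "y \<in> vop (fgen A)"
  then have "\<forall>c. (\<forall>f\<in>A. c * f \<in> Rs) \<longrightarrow> c * y \<in> Rs" using vop_fgen[of A y] by blast
  then have "(\<forall>f\<in>A. 1 * f \<in> Rs) \<longrightarrow> 1 * y \<in> Rs" by (rule spec)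
  then have "1 * y \<in> Rs" using \<open>A \<subseteq> Rs\<close> by auto
  then show "y \<in> Rs" by simp
qed

lemma vop_modl: "modl (vop (fgen A))"
  unfolding vop_def finv_def[of "finv _"] by (rule colon_modl) simp

lemma vop_eq_Rs: "finite A \<Longrightarrow> A \<subseteq> Rs \<Longrightarrow> 1 \<in> vop (fgen A) \<Longrightarrow> vop (fgen A) = Rs"
proof (intro equalityI subsetI)
  fix y assume "finite A" "A \<subseteq> Rs" "y \<in> vop (fgen A)"
  then show "y \<in> Rs" using vop_sub_Rs by blast
next
  fix r :: "'a fract" assume "r \<in> Rs" "1 \<in> vop (fgen A)"
  then have "r * 1 \<in> vop (fgen A)" by (intro modl_smult[OF vop_modl])
  then show "r \<in> vop (fgen A)" by simp
qed

lemma sub_vop: "finite A \<Longrightarrow> A \<subseteq> vop (fgen A)"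
  using vop_fgen[of A] by blast

lemma tclos_iff: "y \<in> tclos X \<longleftrightarrow> (\<exists>F. finite F \<and> F \<subseteq> X \<and> y \<in> vop (fgen F))"
  unfolding tclos_def by blast

lemma tclos_mono: "X \<subseteq> Y \<Longrightarrow> tclos X \<subseteq> tclos Y"
  unfolding subset_iff tclos_iff by blast

lemma sub_tclos: "X \<subseteq> tclos X"
proof
  fix y assume "y \<in> X"
  then show "y \<in> tclos X" unfolding tclos_iff using sub_vop[of "{y}"] by (intro exI[of _ "{y}"]) auto
qed

definition good :: "'a::idom fract set \<Rightarrow> bool" where
  "good Q \<longleftrightarrow> integral_ideal Q \<and> 1 \<notin> tclos Q"

lemma good_not_sub: "good Q \<Longrightarrow> finite G \<Longrightarrow> G \<subseteq> Q \<Longrightarrow> 1 \<in> vop (fgen G) \<Longrightarrow> False"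
  unfolding good_def tclos_iff by blast

lemma finite_sub_chain:
  assumes "finite F" "chain\<^sub>\<subseteq> C" "C \<noteq> {}"
  shows "F \<subseteq> \<Union>C \<longrightarrow> (\<exists>Q\<in>C. F \<subseteq> Q)"
  using assms(1)
proof (induct F rule: finite_induct)
  case empty then show ?case using assms(3) by blast
next
  case (insert a F)
  show ?case
  proof
    assume h: "insert a F \<subseteq> \<Union>C"
    then obtain Q1 where Q1: "Q1 \<in> C" "F \<subseteq> Q1" using insert by blast
    obtain Q2 where Q2: "Q2 \<in> C" "a \<in> Q2" using h by blast
    from assms(2) Q1(1) Q2(1) have "Q1 \<subseteq> Q2 \<or> Q2 \<subseteq> Q1" unfolding chain_subset_def by blast
    then show "\<exists>Q\<in>C. insert a F \<subseteq> Q" using Q1 Q2 by blast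
  qed
qed

lemma chain_ideal:
  assumes ch: "chain\<^sub>\<subseteq> C" and ne: "C \<noteq> {}" and id: "\<forall>Q\<in>C. integral_ideal Q"
  shows "integral_ideal (\<Union>C)"
  unfolding integral_ideal_iff
proof
  have "\<And>Q. Q \<in> C \<Longrightarrow> Q \<subseteq> Rs" using id unfolding integral_ideal_iff by blast
  then show "\<Union>C \<subseteq> Rs" by blast
  have md: "\<And>Q. Q \<in> C \<Longrightarrow> modl Q" using id unfolding integral_ideal_iff by blast
  show "modl (\<Union>C)"
  proof (rule modlI)
    obtain Q where "Q \<in> C" using ne by blast
    then show "0 \<in> \<Union>C" using md[of Q] modl_0 by blast
  next
    fix a b assume "a \<in> \<Union>C" "b \<in> \<Union>C"
    then have "{a,b} \<subseteq> \<Union>C" by simp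
    then obtain Q where Q: "Q \<in> C" "{a,b} \<subseteq> Q" using finite_sub_chain[of "{a,b}" C] ch ne by auto
    then have "a + b \<in> Q" using modl_add[OF md[OF Q(1)]] by simp
    then show "a + b \<in> \<Union>C" using Q(1) by blast
  next
    fix r a :: "'a fract" assume r: "r \<in> Rs" and "a \<in> \<Union>C"
    then obtain Q where Q: "Q \<in> C" "a \<in> Q" by blast
    then have "r * a \<in> Q" using md[OF Q(1)] modl_smult r by blast
    then show "r * a \<in> \<Union>C" using Q(1) by blast
  qed
qed

lemma ideal_zorn:
  assumes D: "integral_ideal D" "\<Phi> D"
    and ch: "\<And>C. C \<noteq> {} \<Longrightarrow> chain\<^sub>\<subseteq> C \<Longrightarrow> \<forall>Q\<in>C. integral_ideal Q \<and> \<Phi> Q \<Longrightarrow> \<Phi> (\<Union>C)"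
  shows "\<exists>M. D \<subseteq> M \<and> integral_ideal M \<and> \<Phi> M \<and> (\<forall>Q. integral_ideal Q \<and> \<Phi> Q \<and> M \<subseteq> Q \<longrightarrow> Q = M)"
proof -
  define A where "A = {Q. integral_ideal Q \<and> \<Phi> Q \<and> D \<subseteq> Q}"
  have "\<forall>C\<in>chains A. \<exists>U\<in>A. \<forall>X\<in>C. X \<subseteq> U"
  proof
    fix C assume C: "C \<in> chains A"
    show "\<exists>U\<in>A. \<forall>X\<in>C. X \<subseteq> U"
    proof (cases "C = {}")
      case True
      have "D \<in> A" using D unfolding A_def by simp
      then show ?thesis using True by (intro bexI[of _ D]) auto
    next
      case False
      have cc: "chain\<^sub>\<subseteq> C" "C \<subseteq> A" using C unfolding chains_def by auto
      have all: "\<forall>Q\<in>C. integral_ideal Q \<and> \<Phi> Q" using cc(2) unfolding A_def by blast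
      have "integral_ideal (\<Union>C)" using chain_ideal[OF cc(1) False] all by blast
      moreover have "\<Phi> (\<Union>C)" using ch[OF False cc(1) all] .
      moreover obtain Q where "Q \<in> C" using False by blast
      then have "D \<subseteq> \<Union>C" using cc(2) unfolding A_def by blast
      ultimately have "\<Union>C \<in> A" unfolding A_def by simp
      then show ?thesis by (intro bexI[of _ "\<Union>C"]) auto
    qed
  qed
  from Zorn_Lemma2[OF this] obtain M where M: "M \<in> A" and mx: "\<forall>X\<in>A. M \<subseteq> X \<longrightarrow> X = M" by blast
  have M': "D \<subseteq> M" "integral_ideal M" "\<Phi> M" using M unfolding A_def by auto
  have "\<forall>Q. integral_ideal Q \<and> \<Phi> Q \<and> M \<subseteq> Q \<longrightarrow> Q = M"
  proof (intro allI impI)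
    fix Q assume h: "integral_ideal Q \<and> \<Phi> Q \<and> M \<subseteq> Q"
    then have "Q \<in> A" using M'(1) unfolding A_def by auto
    then show "Q = M" using mx h by blast
  qed
  then show ?thesis using M' by blast
qed

definition addel :: "'a::idom fract set \<Rightarrow> 'a fract \<Rightarrow> 'a fract set" where
  "addel M a = {q + r * a | q r. q \<in> M \<and> r \<in> Rs}"

lemma addel_ideal:
  assumes M: "integral_ideal M" and a: "a \<in> Rs"
  shows "integral_ideal (addel M a)" "M \<subseteq> addel M a" "a \<in> addel M a"
proof -
  have MR: "M \<subseteq> Rs" and Mm: "modl M" using M unfolding integral_ideal_iff by auto
  show "integral_ideal (addel M a)" unfolding integral_ideal_iff
  proof
    show "addel M a \<subseteq> Rs" unfolding addel_def using MR a by auto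
    show "modl (addel M a)"
    proof (rule modlI)
      have "0 + 0 * a \<in> addel M a" unfolding addel_def using modl_0[OF Mm] Rs_0 by blast
      then show "0 \<in> addel M a" by simp
    next
      fix x y assume "x \<in> addel M a" "y \<in> addel M a"
      then obtain q r q' r' where "x = q + r * a" "y = q' + r' * a" "q \<in> M" "r \<in> Rs" "q' \<in> M" "r' \<in> Rs"
        unfolding addel_def by blast
      moreover have "x + y = (q + q') + (r + r') * a" using calculation by (simp add: algebra_simps)
      ultimately show "x + y \<in> addel M a" unfolding addel_def using modl_add[OF Mm] by blast
    next
      fix c x :: "'a fract" assume c: "c \<in> Rs" and "x \<in> addel M a"
      then obtain q r where "x = q + r * a" "q \<in> M" "r \<in> Rs" unfolding addel_def by blast
      moreover have "c * x = c * q + (c * r) * a" using calculation by (simp add: algebra_simps)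
      ultimately show "c * x \<in> addel M a" unfolding addel_def using modl_smult[OF Mm c] c by blast
    qed
  qed
  show "M \<subseteq> addel M a"
  proof
    fix q assume "q \<in> M"
    then have "q + 0 * a \<in> addel M a" unfolding addel_def using Rs_0 by blast
    then show "q \<in> addel M a" by simp
  qed
  have "0 + 1 * a \<in> addel M a" unfolding addel_def using modl_0[OF Mm] Rs_1 by blast
  then show "a \<in> addel M a" by simp
qed

lemma good_max_prime:
  assumes g: "good M" and mx: "\<forall>Q. integral_ideal Q \<and> good Q \<and> M \<subseteq> Q \<longrightarrow> Q = M"
  shows "prime_ideal M"
proof -
  have M: "integral_ideal M" and n1: "1 \<notin> tclos M" using g unfolding good_def by auto
  have MR: "M \<subseteq> Rs" and Mm: "modl M" using M unfolding integral_ideal_iff by auto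
  have "1 \<notin> M" using n1 sub_tclos by blast
  then have ne: "M \<noteq> Rs" by auto
  have ext: "\<exists>F. finite F \<and> F \<subseteq> addel M a \<and> 1 \<in> vop (fgen F)" if a: "a \<in> Rs" "a \<notin> M" for a
  proof -
    note ai = addel_ideal[OF M a(1)]
    have "addel M a \<noteq> M" using ai(3) a(2) by blast
    then have "\<not> good (addel M a)" using mx ai(1,2) by blast
    then have "1 \<in> tclos (addel M a)" using ai(1) unfolding good_def by blast
    then show ?thesis unfolding tclos_iff .
  qed
  have "\<forall>a\<in>Rs. \<forall>b\<in>Rs. a * b \<in> M \<longrightarrow> a \<in> M \<or> b \<in> M"
  proof (intro ballI impI)
    fix a b assume a: "a \<in> Rs" and b: "b \<in> Rs" and ab: "a * b \<in> M"
    show "a \<in> M \<or> b \<in> M"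
    proof (rule ccontr)
      assume "\<not> (a \<in> M \<or> b \<in> M)"
      then have "a \<notin> M" "b \<notin> M" by auto
      obtain Fa where Fa: "finite Fa" "Fa \<subseteq> addel M a" "1 \<in> vop (fgen Fa)" using ext[OF a \<open>a \<notin> M\<close>] by blast
      obtain Fb where Fb: "finite Fb" "Fb \<subseteq> addel M b" "1 \<in> vop (fgen Fb)" using ext[OF b \<open>b \<notin> M\<close>] by blast
      have "1 * 1 \<in> vop (fgen (setprod Fa Fb))" by (rule vop_mult[OF Fa(1) Fb(1) Fa(3) Fb(3)])
      moreover have "setprod Fa Fb \<subseteq> M"
      proof
        fix e assume "e \<in> setprod Fa Fb"
        then obtain u v where uv: "u \<in> Fa" "v \<in> Fb" "e = u * v" by (rule setprod_E)
        obtain q1 r1 where 1: "u = q1 + r1 * a" "q1 \<in> M" "r1 \<in> Rs" using uv(1) Fa(2) unfolding addel_def by blast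
        obtain q2 r2 where 2: "v = q2 + r2 * b" "q2 \<in> M" "r2 \<in> Rs" using uv(2) Fb(2) unfolding addel_def by blast
        have "e = q1 * v + (r1 * q2) * a + (r1 * r2) * (a * b)" using uv(3) 1(1) 2(1) by (simp add: algebra_simps)
        moreover have "q1 * v \<in> M" using modl_smult2[OF Mm _ 1(2)] uv(2) Fb(2) addel_ideal[OF M b] unfolding integral_ideal_iff by blast
        moreover have "(r1 * q2) * a \<in> M" using modl_smult2[OF Mm a] modl_smult[OF Mm 1(3) 2(2)] by blast
        moreover have "(r1 * r2) * (a * b) \<in> M" using modl_smult[OF Mm _ ab] 1(3) 2(3) by blast
        ultimately show "e \<in> M" using modl_add[OF Mm] by simp
      qed
      ultimately have "1 \<in> tclos M" unfolding tclos_iff using setprod_finite[OF Fa(1) Fb(1)] by auto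
      then show False using n1 by blast
    qed
  qed
  then show ?thesis unfolding prime_ideal_def using M ne by blast
qed

lemma good_extend:
  assumes "good D"
  shows "\<exists>M. D \<subseteq> M \<and> good M \<and> prime_ideal M"
proof -
  have "\<exists>M. D \<subseteq> M \<and> integral_ideal M \<and> (1 \<notin> tclos M) \<and>
     (\<forall>Q. integral_ideal Q \<and> (1 \<notin> tclos Q) \<and> M \<subseteq> Q \<longrightarrow> Q = M)"
  proof (rule ideal_zorn)
    show "integral_ideal D" "1 \<notin> tclos D" using assms unfolding good_def by auto
  next
    fix C :: "'a fract set set" assume ne: "C \<noteq> {}" and ch: "chain\<^sub>\<subseteq> C" and all: "\<forall>Q\<in>C. integral_ideal Q \<and> 1 \<notin> tclos Q"
    show "1 \<notin> tclos (\<Union>C)"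
    proof
      assume "1 \<in> tclos (\<Union>C)"
      then obtain F where F: "finite F" "F \<subseteq> \<Union>C" "1 \<in> vop (fgen F)" unfolding tclos_iff by blast
      then obtain Q where "Q \<in> C" "F \<subseteq> Q" using finite_sub_chain[OF F(1) ch ne] by blast
      then have "1 \<in> tclos Q" unfolding tclos_iff using F by blast
      then show False using all \<open>Q \<in> C\<close> by blast
    qed
  qed
  then obtain M where M: "D \<subseteq> M" "integral_ideal M" "1 \<notin> tclos M"
    "\<forall>Q. integral_ideal Q \<and> (1 \<notin> tclos Q) \<and> M \<subseteq> Q \<longrightarrow> Q = M" by blast
  have "good M" using M unfolding good_def by blast
  moreover have "prime_ideal M" using good_max_prime[OF \<open>good M\<close>] M(4) unfolding good_def by blast
  ultimately show ?thesis using M(1) by blast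
qed

lemma iprod_iff: "x \<in> iprod A B \<longleftrightarrow> (\<exists>(n::nat) f g. x = (\<Sum>i<n. f i * g i) \<and> (\<forall>i<n. f i \<in> A \<and> g i \<in> B))"
  unfolding iprod_def by auto

lemma iprod_0: "0 \<in> iprod A B"
  unfolding iprod_def by (intro CollectI exI[of _ 0]) auto

lemma iprod_snoc:
  assumes x: "x \<in> iprod A B" and a: "a \<in> A" and b: "b \<in> B"
  shows "x + a * b \<in> iprod A B"
proof -
  obtain n :: nat and f g where x': "x = (\<Sum>i<n. f i * g i)" "\<forall>i<n. f i \<in> A \<and> g i \<in> B"
    using x unfolding iprod_iff by blast
  have "(\<Sum>i<Suc n. (f(n:=a)) i * (g(n:=b)) i) = (\<Sum>i<n. (f(n:=a)) i * (g(n:=b)) i) + a * b" by simp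
  also have "(\<Sum>i<n. (f(n:=a)) i * (g(n:=b)) i) = (\<Sum>i<n. f i * g i)" by (rule sum.cong) auto
  finally have e: "x + a * b = (\<Sum>i<Suc n. (f(n:=a)) i * (g(n:=b)) i)" using x' by simp
  have "\<forall>i<Suc n. (f(n:=a)) i \<in> A \<and> (g(n:=b)) i \<in> B" using x' a b by (auto simp: less_Suc_eq)
  then show ?thesis unfolding iprod_iff e by blast
qed

lemma iprod_mem: "a \<in> A \<Longrightarrow> b \<in> B \<Longrightarrow> a * b \<in> iprod A B"
  using iprod_snoc[OF iprod_0] by (metis add_0)

lemma iprod_add0: "x \<in> iprod A B \<Longrightarrow> (\<forall>i<(m::nat). f i \<in> A \<and> g i \<in> B) \<longrightarrow> x + (\<Sum>i<m. f i * g i) \<in> iprod A B"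
proof (induct m)
  case 0 then show ?case by simp
next
  case (Suc m)
  show ?case
  proof
    assume h: "\<forall>i<Suc m. f i \<in> A \<and> g i \<in> B"
    then have "x + (\<Sum>i<m. f i * g i) \<in> iprod A B" using Suc by auto
    then have "x + (\<Sum>i<m. f i * g i) + f m * g m \<in> iprod A B" using h by (intro iprod_snoc) auto
    then show "x + (\<Sum>i<Suc m. f i * g i) \<in> iprod A B" by (simp add: add.assoc)
  qed
qed

lemma iprod_add: "x \<in> iprod A B \<Longrightarrow> y \<in> iprod A B \<Longrightarrow> x + y \<in> iprod A B"
  using iprod_add0[of x A B] unfolding iprod_iff[of y] by blast

lemma iprod_sub:
  assumes "0 \<in> S" "\<And>x y. x \<in> S \<Longrightarrow> y \<in> S \<Longrightarrow> x + y \<in> S" "\<And>a b. a \<in> A \<Longrightarrow> b \<in> B \<Longrightarrow> a * b \<in> S"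
  shows "iprod A B \<subseteq> S"
proof
  fix x assume "x \<in> iprod A B"
  then obtain n :: nat and f g where x: "x = (\<Sum>i<n. f i * g i)" "\<forall>i<n. f i \<in> A \<and> g i \<in> B"
    unfolding iprod_iff by blast
  have "(\<forall>i<n. f i \<in> A \<and> g i \<in> B) \<longrightarrow> (\<Sum>i<n. f i * g i) \<in> S"
    by (induct n) (auto simp: assms)
  then show "x \<in> S" using x by simp
qed

lemma iprod_modl:
  assumes A: "modl A"
  shows "modl (iprod A B)"
proof (rule modlI)
  show "0 \<in> iprod A B" by (rule iprod_0)
  show "\<And>a b. a \<in> iprod A B \<Longrightarrow> b \<in> iprod A B \<Longrightarrow> a + b \<in> iprod A B" by (rule iprod_add)
  fix r x :: "'a fract" assume r: "r \<in> Rs" and "x \<in> iprod A B"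
  have "iprod A B \<subseteq> {x. r * x \<in> iprod A B}"
    by (rule iprod_sub) (auto simp: distrib_left iprod_0 iprod_add mult.assoc[symmetric] intro!: iprod_mem modl_smult[OF A r])
  then show "r * x \<in> iprod A B" using \<open>x \<in> iprod A B\<close> by blast
qed

lemma iprod_ideal: "integral_ideal A \<Longrightarrow> B \<subseteq> Rs \<Longrightarrow> integral_ideal (iprod A B)"
  unfolding integral_ideal_iff
  using iprod_modl[of A B] iprod_sub[of Rs A B] by (auto intro!: Rs_mult)

lemma pvmd_trick:
  assumes pv: "PvMD TYPE('a::idom)" and a: "(a::'a fract) \<in> Rs" and b: "b \<in> Rs" and anz: "a \<noteq> 0" and N: "good N"
  shows "\<exists>f. a * f \<in> Rs \<and> b * f \<in> Rs \<and> (a * f \<notin> N \<or> b * f \<notin> N)"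
proof -
  let ?F = "{a, b}"
  have F: "finite ?F" "?F \<subseteq> Rs" using a b by auto
  have "a \<in> fgen ?F" using fgen_sub[OF F(1)] by blast
  then have "fgen ?F \<noteq> {0}" using anz by blast
  then have T: "tclos (iprod (fgen ?F) (finv (fgen ?F))) = Rs" using pv F unfolding PvMD_def by blast
  let ?V = "finv (fgen ?F)"
  have Vm: "modl ?V" unfolding finv_def by (rule colon_modl) simp
  have Vab: "a * f \<in> Rs \<and> b * f \<in> Rs" if "f \<in> ?V" for f
    using that finv_fgen[OF F(1)] by (auto simp: mult.commute)
  define S where "S = {a * f1 + b * f2 | f1 f2. f1 \<in> ?V \<and> f2 \<in> ?V}"
  have S1: "iprod (fgen ?F) ?V \<subseteq> S"
  proof (rule iprod_sub)
    show "0 \<in> S" unfolding S_def using modl_0[OF Vm] by (intro CollectI exI[of _ 0]) auto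
  next
    fix x y assume "x \<in> S" "y \<in> S"
    then obtain f1 f2 g1 g2 where "x = a * f1 + b * f2" "y = a * g1 + b * g2" "f1 \<in> ?V" "f2 \<in> ?V" "g1 \<in> ?V" "g2 \<in> ?V"
      unfolding S_def by blast
    moreover have "x + y = a * (f1 + g1) + b * (f2 + g2)" using calculation by (simp add: algebra_simps)
    ultimately show "x + y \<in> S" unfolding S_def using modl_add[OF Vm] by blast
  next
    fix e c assume e: "e \<in> fgen ?F" and c: "c \<in> ?V"
    have "modl {r * a + r' * b | r r'. r \<in> Rs \<and> r' \<in> Rs}"
    proof (rule modlI)
      show "0 \<in> {r * a + r' * b | r r'. r \<in> Rs \<and> r' \<in> Rs}" by (intro CollectI exI[of _ 0]) auto
    next
      fix x y assume "x \<in> {r * a + r' * b | r r'. r \<in> Rs \<and> r' \<in> Rs}" "y \<in> {r * a + r' * b | r r'. r \<in> Rs \<and> r' \<in> Rs}"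
      then obtain r1 r1' r2 r2' where "x = r1 * a + r1' * b" "y = r2 * a + r2' * b" "r1 \<in> Rs" "r1' \<in> Rs" "r2 \<in> Rs" "r2' \<in> Rs" by blast
      moreover have "x + y = (r1 + r2) * a + (r1' + r2') * b" using calculation by (simp add: algebra_simps)
      ultimately show "x + y \<in> {r * a + r' * b | r r'. r \<in> Rs \<and> r' \<in> Rs}" by blast
    next
      fix t x :: "'a fract" assume t: "t \<in> Rs" and "x \<in> {r * a + r' * b | r r'. r \<in> Rs \<and> r' \<in> Rs}"
      then obtain r1 r1' where "x = r1 * a + r1' * b" "r1 \<in> Rs" "r1' \<in> Rs" by blast
      moreover have "t * x = (t * r1) * a + (t * r1') * b" using calculation by (simp add: algebra_simps)
      ultimately show "t * x \<in> {r * a + r' * b | r r'. r \<in> Rs \<and> r' \<in> Rs}" using t by blast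
    qed
    moreover have "?F \<subseteq> {r * a + r' * b | r r'. r \<in> Rs \<and> r' \<in> Rs}"
    proof -
      have "a = 1 * a + 0 * b" "b = 0 * a + 1 * b" by simp_all
      then show ?thesis using Rs_0 Rs_1 by blast
    qed
    ultimately have "fgen ?F \<subseteq> {r * a + r' * b | r r'. r \<in> Rs \<and> r' \<in> Rs}" by (intro fgen_least[OF F(1)])
    then obtain r r' where rr: "e = r * a + r' * b" "r \<in> Rs" "r' \<in> Rs" using e by blast
    have "e * c = a * (r * c) + b * (r' * c)" using rr by (simp add: algebra_simps)
    moreover have "r * c \<in> ?V" "r' * c \<in> ?V" using modl_smult[OF Vm] rr c by auto
    ultimately show "e * c \<in> S" unfolding S_def by blast
  qed
  have "\<not> iprod (fgen ?F) ?V \<subseteq> N"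
  proof
    assume "iprod (fgen ?F) ?V \<subseteq> N"
    then have "Rs \<subseteq> tclos N" using tclos_mono T by metis
    then show False using N Rs_1 unfolding good_def by blast
  qed
  then obtain e where "e \<in> S" "e \<notin> N" using S1 by blast
  then obtain f1 f2 where f: "e = a * f1 + b * f2" "f1 \<in> ?V" "f2 \<in> ?V" unfolding S_def by blast
  have Nm: "modl N" using N unfolding good_def integral_ideal_iff by blast
  have "a * f1 \<notin> N \<or> b * f2 \<notin> N" using f(1) \<open>e \<notin> N\<close> modl_add[OF Nm] by blast
  then show ?thesis using Vab f(2,3) by blast
qed

lemma addel_prod:
  assumes M: "integral_ideal M" and a: "a \<in> Rs" and b: "b \<in> Rs" and ab: "a * b \<in> M"
    and u: "u \<in> addel M a" and v: "v \<in> addel M b"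
  shows "u * v \<in> M"
proof -
  have Mm: "modl M" using M unfolding integral_ideal_iff by auto
  obtain q1 r1 where 1: "u = q1 + r1 * a" "q1 \<in> M" "r1 \<in> Rs" using u unfolding addel_def by blast
  obtain q2 r2 where 2: "v = q2 + r2 * b" "q2 \<in> M" "r2 \<in> Rs" using v unfolding addel_def by blast
  have vR: "v \<in> Rs" using addel_ideal(1)[OF M b] v unfolding integral_ideal_iff by blast
  have "u * v = q1 * v + (r1 * q2) * a + (r1 * r2) * (a * b)" using 1(1) 2(1) by (simp add: algebra_simps)
  moreover have "q1 * v \<in> M" using modl_smult2[OF Mm vR 1(2)] .
  moreover have "(r1 * q2) * a \<in> M" using modl_smult2[OF Mm a] modl_smult[OF Mm 1(3) 2(2)] by blast
  moreover have "(r1 * r2) * (a * b) \<in> M" using modl_smult[OF Mm _ ab] 1(3) 2(3) by blast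
  ultimately show ?thesis using modl_add[OF Mm] by simp
qed

lemma prime_ideal_ideal: "prime_ideal P \<Longrightarrow> integral_ideal P" unfolding prime_ideal_def by blast
lemma prime_modl: "prime_ideal P \<Longrightarrow> modl P" unfolding prime_ideal_def integral_ideal_iff by blast
lemma prime_sub: "prime_ideal P \<Longrightarrow> P \<subseteq> Rs" unfolding prime_ideal_def integral_ideal_iff by blast
lemma prime_1: "prime_ideal P \<Longrightarrow> 1 \<notin> P"
proof
  assume P: "prime_ideal P" and "1 \<in> P"
  then have "Rs \<subseteq> P" using modl_smult2[OF prime_modl[OF P], of _ 1] by fastforce
  then show False using P prime_sub[OF P] unfolding prime_ideal_def by blast
qed
lemma prime_0: "prime_ideal P \<Longrightarrow> 0 \<in> P" using prime_modl modl_0 by blast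
lemma prime_mult: "prime_ideal P \<Longrightarrow> a \<in> Rs \<Longrightarrow> b \<in> Rs \<Longrightarrow> a \<notin> P \<Longrightarrow> b \<notin> P \<Longrightarrow> a * b \<notin> P"
  unfolding prime_ideal_def by blast
lemma prime_pow_notin: "prime_ideal P \<Longrightarrow> a \<in> Rs \<Longrightarrow> a \<notin> P \<Longrightarrow> a ^ n \<notin> P"
  by (induct n) (auto simp: prime_1 dest: prime_mult)
lemma prime_pow_mem: "prime_ideal P \<Longrightarrow> y \<in> Rs \<Longrightarrow> y ^ n \<in> P \<Longrightarrow> y \<in> P"
  using prime_pow_notin by blast

lemma pideal_iff: "w \<in> pideal x \<longleftrightarrow> (\<exists>r\<in>Rs. w = emb x * r)"
  unfolding pideal_def by auto

lemma pideal_ideal: "integral_ideal (pideal x)"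
  unfolding integral_ideal_iff
proof
  show "pideal x \<subseteq> Rs" unfolding subset_iff pideal_iff by auto
  show "modl (pideal x)"
  proof (rule modlI)
    show "0 \<in> pideal x" unfolding pideal_iff by (intro bexI[of _ 0]) auto
  next
    fix a b assume "a \<in> pideal x" "b \<in> pideal x"
    then obtain r r' where "r \<in> Rs" "r' \<in> Rs" "a = emb x * r" "b = emb x * r'" unfolding pideal_iff by blast
    then show "a + b \<in> pideal x" unfolding pideal_iff by (intro bexI[of _ "r + r'"]) (auto simp: distrib_left)
  next
    fix c a :: "'a fract" assume "c \<in> Rs" "a \<in> pideal x"
    then obtain r where "r \<in> Rs" "a = emb x * r" unfolding pideal_iff by blast
    then show "c * a \<in> pideal x" using \<open>c \<in> Rs\<close> unfolding pideal_iff by (intro bexI[of _ "c * r"]) (auto simp: ac_simps)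
  qed
qed

lemma key_minimal:
  assumes mp: "minimal_prime_over P (pideal x)" and p: "p \<in> P"
  shows "\<exists>s. s \<in> Rs \<and> s \<notin> P \<and> (\<exists>n. s * p ^ n \<in> pideal x)"
proof (rule ccontr)
  assume na: "\<not> ?thesis"
  have P: "prime_ideal P" and XP: "pideal x \<subseteq> P"
    and mn: "\<forall>Q. prime_ideal Q \<and> pideal x \<subseteq> Q \<and> Q \<subseteq> P \<longrightarrow> Q = P"
    using mp unfolding minimal_prime_over_def by auto
  have pR: "p \<in> Rs" using p prime_sub[OF P] by blast
  define S where "S = {s * p ^ n | s n. s \<in> Rs \<and> s \<notin> P}"
  have XS: "pideal x \<inter> S = {}"
  proof (rule ccontr)
    assume "pideal x \<inter> S \<noteq> {}"
    then obtain w where w: "w \<in> pideal x" "w \<in> S" by blast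
    then obtain s n where "s \<in> Rs" "s \<notin> P" "w = s * p ^ n" unfolding S_def by blast
    then show False using na w(1) by blast
  qed
  have "\<exists>M. pideal x \<subseteq> M \<and> integral_ideal M \<and> M \<inter> S = {} \<and>
      (\<forall>Q. integral_ideal Q \<and> Q \<inter> S = {} \<and> M \<subseteq> Q \<longrightarrow> Q = M)"
    by (rule ideal_zorn[where \<Phi>="\<lambda>Q. Q \<inter> S = {}", OF pideal_ideal XS]) blast
  then obtain M where M: "pideal x \<subseteq> M" "integral_ideal M" "M \<inter> S = {}"
    and mx: "\<forall>Q. integral_ideal Q \<and> Q \<inter> S = {} \<and> M \<subseteq> Q \<longrightarrow> Q = M" by blast
  have MR: "M \<subseteq> Rs" using M(2) unfolding integral_ideal_iff by blast
  have inS: "s * p ^ n \<in> S" if "s \<in> Rs" "s \<notin> P" for s n using that unfolding S_def by (intro CollectI exI[of _ s] exI[of _ n]) auto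
  have MP: "M \<subseteq> P"
  proof
    fix m assume "m \<in> M"
    show "m \<in> P"
    proof (rule ccontr)
      assume "m \<notin> P"
      moreover have "m \<in> Rs" using \<open>m \<in> M\<close> MR by blast
      ultimately have "m * p ^ 0 \<in> S" using inS by blast
      then show False using M(3) \<open>m \<in> M\<close> by auto
    qed
  qed
  have "1 * p ^ 0 \<in> S" using inS[OF Rs_1 prime_1[OF P]] .
  then have "1 \<in> S" by simp
  then have "1 \<notin> M" using M(3) by blast
  then have Mne: "M \<noteq> Rs" by auto
  have ext: "\<exists>s n. s \<in> Rs \<and> s \<notin> P \<and> s * p ^ n \<in> addel M a" if a: "a \<in> Rs" "a \<notin> M" for a
  proof -
    note ai = addel_ideal[OF M(2) a(1)]
    have "addel M a \<noteq> M" using ai(3) a(2) by blast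
    then have "addel M a \<inter> S \<noteq> {}" using mx ai(1,2) by blast
    then obtain w where w: "w \<in> addel M a" "w \<in> S" by blast
    then obtain s n where "s \<in> Rs" "s \<notin> P" "w = s * p ^ n" unfolding S_def by blast
    then show ?thesis using w(1) by (intro exI[of _ s] exI[of _ n]) auto
  qed
  have "\<forall>a\<in>Rs. \<forall>b\<in>Rs. a * b \<in> M \<longrightarrow> a \<in> M \<or> b \<in> M"
  proof (intro ballI impI)
    fix a b assume a: "a \<in> Rs" and b: "b \<in> Rs" and ab: "a * b \<in> M"
    show "a \<in> M \<or> b \<in> M"
    proof (rule ccontr)
      assume "\<not> (a \<in> M \<or> b \<in> M)"
      then have "a \<notin> M" "b \<notin> M" by auto
      obtain s1 n1 where 1: "s1 \<in> Rs" "s1 \<notin> P" "s1 * p ^ n1 \<in> addel M a" using ext[OF a \<open>a \<notin> M\<close>] by blast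
      obtain s2 n2 where 2: "s2 \<in> Rs" "s2 \<notin> P" "s2 * p ^ n2 \<in> addel M b" using ext[OF b \<open>b \<notin> M\<close>] by blast
      have "(s1 * p ^ n1) * (s2 * p ^ n2) \<in> M" by (rule addel_prod[OF M(2) a b ab 1(3) 2(3)])
      moreover have "(s1 * p ^ n1) * (s2 * p ^ n2) = (s1 * s2) * p ^ (n1 + n2)" by (simp add: power_add ac_simps)
      moreover have "(s1 * s2) * p ^ (n1 + n2) \<in> S" using inS[OF Rs_mult[OF 1(1) 2(1)] prime_mult[OF P 1(1) 2(1) 1(2) 2(2)]] .
      ultimately show False using M(3) by auto
    qed
  qed
  then have "prime_ideal M" unfolding prime_ideal_def using M(2) Mne by blast
  then have "M = P" using mn M(1) MP by blast
  moreover have "1 * p ^ 1 \<in> S" using inS[OF Rs_1 prime_1[OF P]] .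
  then have "p \<in> S" by simp
  ultimately show False using M(3) p by blast
qed

lemma pow_vop:
  assumes G: "finite G" "G \<subseteq> Rs" and g: "g \<in> Rs" and y: "y \<in> vop (fgen (insert g G))"
  shows "y ^ Suc m \<in> vop (fgen (insert (g ^ Suc m) G))"
proof (induct m)
  case 0 then show ?case using y by simp
next
  case (Suc m)
  have "y * y ^ Suc m \<in> vop (fgen (setprod (insert g G) (insert (g ^ Suc m) G)))"
    by (rule vop_mult) (use G y Suc in auto)
  moreover have "vop (fgen (setprod (insert g G) (insert (g ^ Suc m) G))) \<subseteq> vop (fgen (insert (g ^ Suc (Suc m)) G))"
  proof (rule vop_mono)
    show "finite (setprod (insert g G) (insert (g ^ Suc m) G))" using G by (intro setprod_finite) auto
    show "finite (insert (g ^ Suc (Suc m)) G)" using G by auto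
    let ?H = "insert (g ^ Suc (Suc m)) G"
    have H: "finite ?H" using G by auto
    have sub: "?H \<subseteq> fgen ?H" by (rule fgen_sub[OF H])
    have md: "modl (fgen ?H)" by (rule fgen_modl[OF H])
    show "setprod (insert g G) (insert (g ^ Suc m) G) \<subseteq> fgen ?H"
    proof
      fix e assume "e \<in> setprod (insert g G) (insert (g ^ Suc m) G)"
      then obtain u v where uv: "u \<in> insert g G" "v \<in> insert (g ^ Suc m) G" "e = u * v" by (rule setprod_E)
      have uR: "u \<in> Rs" using uv(1) G g by auto
      have vR: "v \<in> Rs" using uv(2) G g Rs_pow by auto
      show "e \<in> fgen ?H"
      proof (cases "v \<in> G")
        case True
        then have "v \<in> fgen ?H" using sub by blast
        then show ?thesis using uv(3) modl_smult[OF md uR] by simp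
      next
        case False
        then have v: "v = g ^ Suc m" using uv(2) by simp
        show ?thesis
        proof (cases "u \<in> G")
          case True
          then have "u \<in> fgen ?H" using sub by blast
          then show ?thesis using uv(3) modl_smult2[OF md vR] by simp
        next
          case False
          then have "u = g" using uv(1) by simp
          then have "e = g ^ Suc (Suc m)" using uv(3) v by simp
          then show ?thesis using sub by blast
        qed
      qed
    qed
  qed
  ultimately show ?case by auto
qed

lemma rad_claim:
  assumes mp: "minimal_prime_over P (pideal x)" and xnz: "x \<noteq> 0"
  shows "\<forall>G y. finite G \<longrightarrow> G \<subseteq> P \<longrightarrow> card (G - pideal x) = k \<longrightarrow> y \<in> vop (fgen G) \<longrightarrow>
          (\<exists>s n. s \<in> Rs \<and> s \<notin> P \<and> s * y ^ n \<in> pideal x)"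
proof (induct k rule: less_induct)
  case (less k)
  have P: "prime_ideal P" using mp unfolding minimal_prime_over_def by blast
  have PR: "P \<subseteq> Rs" by (rule prime_sub[OF P])
  have Pm: "modl P" by (rule prime_modl[OF P])
  have Xm: "modl (pideal x)" using pideal_ideal unfolding integral_ideal_iff by blast
  have XP: "pideal x \<subseteq> P" using mp unfolding minimal_prime_over_def by blast
  show ?case
  proof (intro allI impI)
    fix G y assume G: "finite G" "G \<subseteq> P" and k: "card (G - pideal x) = k" and y: "y \<in> vop (fgen G)"
    show "\<exists>s n. s \<in> Rs \<and> s \<notin> P \<and> s * y ^ n \<in> pideal x"
    proof (cases "G \<subseteq> pideal x")
      case True
      let ?c = "inverse (emb x)"
      have ex: "emb x \<noteq> 0" using emb_nz[OF xnz] .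
      have "\<forall>f\<in>G. ?c * f \<in> Rs"
      proof
        fix f assume "f \<in> G"
        then have "f \<in> pideal x" using True by blast
        then obtain r where r: "r \<in> Rs" "f = emb x * r" unfolding pideal_iff by blast
        have "?c * f = r" using ex r(2) by (simp add: field_simps)
        then show "?c * f \<in> Rs" using r(1) by simp
      qed
      moreover have "(\<forall>f\<in>G. ?c * f \<in> Rs) \<longrightarrow> ?c * y \<in> Rs" using y unfolding vop_fgen[OF G(1)] by (rule spec)
      ultimately have cy: "?c * y \<in> Rs" by blast
      have yeq: "y = emb x * (?c * y)" using ex by (simp add: mult.assoc[symmetric])
      have "y \<in> pideal x" unfolding pideal_iff using yeq cy by (intro bexI[of _ "?c * y"])
      then have "1 * y ^ 1 \<in> pideal x" by simp
      then show ?thesis using Rs_1 prime_1[OF P] by (intro exI[of _ 1] exI[of _ 1]) simp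
    next
      case False
      then obtain g where g: "g \<in> G" "g \<notin> pideal x" by blast
      define G' where "G' = G - {g}"
      have G': "finite G'" "G' \<subseteq> Rs" "G' \<subseteq> P" "G = insert g G'" using G g PR unfolding G'_def by auto
      have gP: "g \<in> P" and gR: "g \<in> Rs" using g G PR by auto
      obtain s n where s: "s \<in> Rs" "s \<notin> P" "s * g ^ n \<in> pideal x" using key_minimal[OF mp gP] by blast
      have sg: "s * g ^ Suc n \<in> pideal x" using modl_smult2[OF Xm gR s(3)] by (simp add: ac_simps)
      have y1: "y ^ Suc n \<in> vop (fgen (insert (g ^ Suc n) G'))"
        by (rule pow_vop[OF G'(1,2) gR]) (use y G'(4) in simp)
      define G'' where "G'' = (\<lambda>a. s * a) ` insert (g ^ Suc n) G'"
      have y2: "s * y ^ Suc n \<in> vop (fgen G'')" unfolding G''_def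
        by (rule vop_smult) (use G'(1) y1 in auto)
      have G''f: "finite G''" unfolding G''_def using G'(1) by simp
      have gnP: "g ^ Suc n \<in> P" using modl_smult[OF Pm Rs_pow[OF gR] gP] by (simp add: ac_simps)
      have G''P: "G'' \<subseteq> P" unfolding G''_def using modl_smult[OF Pm s(1)] gnP G'(3) by auto
      have "G'' - pideal x \<subseteq> (\<lambda>a. s * a) ` (G' - pideal x)"
      proof
        fix e assume e: "e \<in> G'' - pideal x"
        then obtain h where h: "h \<in> insert (g ^ Suc n) G'" "e = s * h" unfolding G''_def by blast
        have "h \<noteq> g ^ Suc n" using e h sg by auto
        then have "h \<in> G'" using h(1) by simp
        moreover have "h \<notin> pideal x" using e h(2) modl_smult[OF Xm s(1)] by auto
        ultimately show "e \<in> (\<lambda>a. s * a) ` (G' - pideal x)" using h(2) by blast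
      qed
      then have "card (G'' - pideal x) \<le> card ((\<lambda>a. s * a) ` (G' - pideal x))"
        using G'(1) by (intro card_mono) auto
      also have "\<dots> \<le> card (G' - pideal x)" by (rule card_image_le) (use G'(1) in auto)
      also have "\<dots> < k"
      proof -
        have "G - pideal x = insert g (G' - pideal x)" using g G'(4) by auto
        moreover have "g \<notin> G' - pideal x" unfolding G'_def by auto
        ultimately have "k = Suc (card (G' - pideal x))" using k G'(1) by simp
        then show ?thesis by simp
      qed
      finally have lt: "card (G'' - pideal x) < k" .
      have "\<exists>s0 n0. s0 \<in> Rs \<and> s0 \<notin> P \<and> s0 * (s * y ^ Suc n) ^ n0 \<in> pideal x"
        using less[OF lt, rule_format, OF G''f G''P refl y2] .
      then obtain s' n' where s': "s' \<in> Rs" "s' \<notin> P" "s' * (s * y ^ Suc n) ^ n' \<in> pideal x"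
        by blast
      have eq: "s' * (s * y ^ Suc n) ^ n' = (s' * s ^ n') * y ^ (Suc n * n')"
        by (simp only: power_mult_distrib power_mult[symmetric] mult.assoc)
      have r1: "s' * s ^ n' \<in> Rs" using s'(1) s(1) by auto
      have r2: "s' * s ^ n' \<notin> P" using prime_mult[OF P s'(1) Rs_pow[OF s(1)] s'(2) prime_pow_notin[OF P s(1,2)]] .
      have r3: "(s' * s ^ n') * y ^ (Suc n * n') \<in> pideal x" using s'(3) unfolding eq .
      show ?thesis using r1 r2 r3 by (intro exI[of _ "s' * s ^ n'"] exI[of _ "Suc n * n'"]) simp
    qed
  qed
qed

lemma P_tclos:
  assumes mp: "minimal_prime_over P (pideal x)" and xnz: "x \<noteq> 0"
  shows "tclos P = P"
proof
  show "P \<subseteq> tclos P" by (rule sub_tclos)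
  have P: "prime_ideal P" using mp unfolding minimal_prime_over_def by blast
  have XP: "pideal x \<subseteq> P" using mp unfolding minimal_prime_over_def by blast
  show "tclos P \<subseteq> P"
  proof
    fix y assume "y \<in> tclos P"
    then obtain G where G: "finite G" "G \<subseteq> P" "y \<in> vop (fgen G)" unfolding tclos_iff by blast
    have "\<exists>s n. s \<in> Rs \<and> s \<notin> P \<and> s * y ^ n \<in> pideal x"
      using rad_claim[OF mp xnz, of "card (G - pideal x)", rule_format, OF G(1,2) refl G(3)] .
    then obtain s n where s: "s \<in> Rs" "s \<notin> P" "s * y ^ n \<in> pideal x" by blast
    have yR: "y \<in> Rs" using vop_sub_Rs[OF G(1)] G(2,3) prime_sub[OF P] by blast
    have "s * y ^ n \<in> P" using s(3) XP by blast
    then have "s \<in> P \<or> y ^ n \<in> P" using P s(1) Rs_pow[OF yR] unfolding prime_ideal_def by blast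
    then have "y ^ n \<in> P" using s(2) by blast
    then show "y \<in> P" using prime_pow_mem[OF P yR] by blast
  qed
qed

lemma P_good:
  assumes mp: "minimal_prime_over P (pideal x)" and xnz: "x \<noteq> 0"
  shows "good P"
proof -
  have P: "prime_ideal P" using mp unfolding minimal_prime_over_def by blast
  show ?thesis unfolding good_def using P_tclos[OF mp xnz] prime_ideal_ideal[OF P] prime_1[OF P] by simp
qed

definition Wset :: "'a::idom fract set \<Rightarrow> 'a fract set" where
  "Wset A = {b. \<exists>H. finite H \<and> H \<subseteq> Rs \<and> 1 \<in> vop (fgen H) \<and> (\<forall>h\<in>H. h * b \<in> A)}"

lemma one_vop1: "finite {1::'a::idom fract}" "{1::'a fract} \<subseteq> Rs" "1 \<in> vop (fgen {1::'a::idom fract})"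
  using sub_vop[of "{1::'a fract}"] by auto

lemma setprod_Rs: "H1 \<subseteq> Rs \<Longrightarrow> H2 \<subseteq> Rs \<Longrightarrow> setprod H1 H2 \<subseteq> Rs"
  by (auto elim!: setprod_E)

lemma W_pair:
  assumes A: "modl A"
    and H1: "finite H1" "H1 \<subseteq> Rs" "1 \<in> vop (fgen H1)" and H2: "finite H2" "H2 \<subseteq> Rs" "1 \<in> vop (fgen H2)"
  shows "finite (setprod H1 H2) \<and> setprod H1 H2 \<subseteq> Rs \<and> 1 \<in> vop (fgen (setprod H1 H2))"
  using setprod_finite[OF H1(1) H2(1)] setprod_Rs[OF H1(2) H2(2)] vop_mult[OF H1(1) H2(1) H1(3) H2(3)] by simp

lemma Wset_modl:
  assumes A: "modl A"
  shows "modl (Wset A)"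
proof (rule modlI)
  show "0 \<in> Wset A" unfolding Wset_def using one_vop1 modl_0[OF A] by (intro CollectI exI[of _ "{1}"]) auto
next
  fix b1 b2 assume "b1 \<in> Wset A" "b2 \<in> Wset A"
  then obtain H1 H2 where H1: "finite H1" "H1 \<subseteq> Rs" "1 \<in> vop (fgen H1)" "\<forall>h\<in>H1. h * b1 \<in> A"
    and H2: "finite H2" "H2 \<subseteq> Rs" "1 \<in> vop (fgen H2)" "\<forall>h\<in>H2. h * b2 \<in> A" unfolding Wset_def by blast
  have "\<forall>e\<in>setprod H1 H2. e * (b1 + b2) \<in> A"
  proof
    fix e assume "e \<in> setprod H1 H2"
    then obtain h1 h2 where h: "h1 \<in> H1" "h2 \<in> H2" "e = h1 * h2" by (rule setprod_E)
    have "e * (b1 + b2) = h2 * (h1 * b1) + h1 * (h2 * b2)" using h(3) by (simp add: algebra_simps)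
    moreover have "h2 * (h1 * b1) \<in> A" using modl_smult[OF A] h H1 H2 by blast
    moreover have "h1 * (h2 * b2) \<in> A" using modl_smult[OF A] h H1 H2 by blast
    ultimately show "e * (b1 + b2) \<in> A" using modl_add[OF A] by simp
  qed
  then show "b1 + b2 \<in> Wset A" unfolding Wset_def using W_pair[OF A H1(1-3) H2(1-3)] by blast
next
  fix r b :: "'a fract" assume r: "r \<in> Rs" and "b \<in> Wset A"
  then obtain H where H: "finite H" "H \<subseteq> Rs" "1 \<in> vop (fgen H)" "\<forall>h\<in>H. h * b \<in> A" unfolding Wset_def by blast
  have "\<forall>h\<in>H. h * (r * b) \<in> A"
  proof
    fix h assume "h \<in> H"
    then have "r * (h * b) \<in> A" using modl_smult[OF A r] H(4) by blast
    then show "h * (r * b) \<in> A" by (simp add: ac_simps)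
  qed
  then show "r * b \<in> Wset A" unfolding Wset_def using H by blast
qed

lemma W_finite:
  assumes A: "modl A" and G: "finite G"
  shows "(\<forall>g\<in>G. z * g \<in> Wset A) \<longrightarrow> (\<exists>H. finite H \<and> H \<subseteq> Rs \<and> 1 \<in> vop (fgen H) \<and> (\<forall>h\<in>H. \<forall>g\<in>G. h * (z * g) \<in> A))"
  using G
proof (induct G rule: finite_induct)
  case empty
  show ?case using one_vop1 by (intro impI exI[of _ "{1}"]) auto
next
  case (insert g G)
  show ?case
  proof
    assume h: "\<forall>g'\<in>insert g G. z * g' \<in> Wset A"
    then obtain H1 where H1: "finite H1" "H1 \<subseteq> Rs" "1 \<in> vop (fgen H1)" "\<forall>h\<in>H1. \<forall>g\<in>G. h * (z * g) \<in> A"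
      using insert by auto
    obtain H2 where H2: "finite H2" "H2 \<subseteq> Rs" "1 \<in> vop (fgen H2)" "\<forall>h\<in>H2. h * (z * g) \<in> A"
      using h unfolding Wset_def by blast
    have "\<forall>e\<in>setprod H1 H2. \<forall>g'\<in>insert g G. e * (z * g') \<in> A"
    proof (intro ballI)
      fix e g' assume e: "e \<in> setprod H1 H2" and g': "g' \<in> insert g G"
      from e obtain h1 h2 where hh: "h1 \<in> H1" "h2 \<in> H2" "e = h1 * h2" by (rule setprod_E)
      show "e * (z * g') \<in> A"
      proof (cases "g' = g")
        case True
        have "h1 * (h2 * (z * g)) \<in> A" using modl_smult[OF A] hh H1 H2 by blast
        then show ?thesis using True hh(3) by (simp add: ac_simps)
      next
        case False
        then have "g' \<in> G" using g' by simp
        then have "h2 * (h1 * (z * g')) \<in> A" using modl_smult[OF A] hh H1 H2 by blast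
        then show ?thesis using hh(3) by (simp add: ac_simps)
      qed
    qed
    then show "\<exists>H. finite H \<and> H \<subseteq> Rs \<and> 1 \<in> vop (fgen H) \<and> (\<forall>h\<in>H. \<forall>g'\<in>insert g G. h * (z * g') \<in> A)"
      using W_pair[OF A H1(1-3) H2(1-3)] by blast
  qed
qed

lemma wop_sub_W:
  assumes A: "modl A" and BW: "B \<subseteq> Wset A"
  shows "wop B \<subseteq> wop A"
proof
  fix z assume "z \<in> wop B"
  then obtain G where G: "finite G" "G \<subseteq> Rs" "vop (fgen G) = Rs" and zc: "z \<in> colon B (fgen G)"
    unfolding wop_def by blast
  have "\<forall>g\<in>G. z * g \<in> Wset A" using zc fgen_sub[OF G(1)] BW unfolding colon_def by blast
  then obtain H where H: "finite H" "H \<subseteq> Rs" "1 \<in> vop (fgen H)" "\<forall>h\<in>H. \<forall>g\<in>G. h * (z * g) \<in> A"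
    using W_finite[OF A G(1), of z] by blast
  have G1: "1 \<in> vop (fgen G)" using G(3) by simp
  have K: "finite (setprod G H)" "setprod G H \<subseteq> Rs" "1 \<in> vop (fgen (setprod G H))"
    using W_pair[OF A G(1,2) G1 H(1-3)] by auto
  have Kv: "vop (fgen (setprod G H)) = Rs" by (rule vop_eq_Rs[OF K])
  have md: "modl {e. z * e \<in> A}"
    by (rule modlI) (auto simp: distrib_left modl_0[OF A] modl_add[OF A] mult.left_commute intro: modl_smult[OF A])
  have "setprod G H \<subseteq> {e. z * e \<in> A}"
  proof
    fix e assume "e \<in> setprod G H"
    then obtain g h where gh: "g \<in> G" "h \<in> H" "e = g * h" by (rule setprod_E)
    then have "h * (z * g) \<in> A" using H(4) by blast
    then show "e \<in> {e. z * e \<in> A}" using gh(3) by (simp add: ac_simps)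
  qed
  then have "fgen (setprod G H) \<subseteq> {e. z * e \<in> A}" by (rule fgen_least[OF K(1) md])
  then have "z \<in> colon A (fgen (setprod G H))" unfolding colon_def by blast
  then show "z \<in> wop A" unfolding wop_def using K(1,2) Kv by blast
qed

lemma wop_mono: "A \<subseteq> B \<Longrightarrow> wop A \<subseteq> wop B"
  unfolding wop_def colon_def by blast

lemma iadd_iff: "w \<in> iadd A B \<longleftrightarrow> (\<exists>a b. w = a + b \<and> a \<in> A \<and> b \<in> B)"
  unfolding iadd_def by blast

lemma iadd_ideal:
  assumes A: "integral_ideal A" and B: "integral_ideal B"
  shows "integral_ideal (iadd A B)" "A \<subseteq> iadd A B" "B \<subseteq> iadd A B"
proof -
  have Am: "modl A" "A \<subseteq> Rs" and Bm: "modl B" "B \<subseteq> Rs" using A B unfolding integral_ideal_iff by auto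
  show "A \<subseteq> iadd A B"
  proof
    fix a assume "a \<in> A" then have "a + 0 \<in> iadd A B" unfolding iadd_iff using modl_0[OF Bm(1)] by blast
    then show "a \<in> iadd A B" by simp
  qed
  show "B \<subseteq> iadd A B"
  proof
    fix b assume "b \<in> B" then have "0 + b \<in> iadd A B" unfolding iadd_iff using modl_0[OF Am(1)] by blast
    then show "b \<in> iadd A B" by simp
  qed
  show "integral_ideal (iadd A B)" unfolding integral_ideal_iff
  proof
    show "iadd A B \<subseteq> Rs" unfolding subset_iff iadd_iff using Am(2) Bm(2) by blast
    show "modl (iadd A B)"
    proof (rule modlI)
      have "0 + 0 \<in> iadd A B" unfolding iadd_iff using modl_0[OF Am(1)] modl_0[OF Bm(1)] by blast
      then show "0 \<in> iadd A B" by simp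
    next
      fix u v assume "u \<in> iadd A B" "v \<in> iadd A B"
      then obtain a b a' b' where h: "u = a + b" "v = a' + b'" "a \<in> A" "b \<in> B" "a' \<in> A" "b' \<in> B" unfolding iadd_iff by blast
      then have "u + v = (a + a') + (b + b')" by (simp add: ac_simps)
      then show "u + v \<in> iadd A B" unfolding iadd_iff using modl_add[OF Am(1)] modl_add[OF Bm(1)] h by blast
    next
      fix r u :: "'a fract" assume r: "r \<in> Rs" and "u \<in> iadd A B"
      then obtain a b where h: "u = a + b" "a \<in> A" "b \<in> B" unfolding iadd_iff by blast
      then have "r * u = r * a + r * b" by (simp add: algebra_simps)
      then show "r * u \<in> iadd A B" unfolding iadd_iff using modl_smult[OF Am(1) r] modl_smult[OF Bm(1) r] h by blast
    qed
  qed
qed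

lemma iprod_Rs: "integral_ideal A \<Longrightarrow> iprod A Rs = A"
proof
  assume A: "integral_ideal A"
  have Am: "modl A" using A unfolding integral_ideal_iff by auto
  show "iprod A Rs \<subseteq> A" by (rule iprod_sub) (auto intro: modl_0[OF Am] modl_add[OF Am] modl_smult2[OF Am])
  show "A \<subseteq> iprod A Rs" using iprod_mem[of _ A 1 Rs] by auto
qed

locale lsetup =
  fixes x :: "'a::idom" and P :: "'a fract set"
  assumes xnz: "x \<noteq> 0" and mp: "minimal_prime_over P (pideal x)"
begin

abbreviation II where "II \<equiv> ((\<lambda>y. emb x * y) ` localization P) \<inter> Rs"

lemma P: "prime_ideal P" using mp unfolding minimal_prime_over_def by blast
lemma XP: "pideal x \<subseteq> P" using mp unfolding minimal_prime_over_def by blast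
lemma PR: "P \<subseteq> Rs" by (rule prime_sub[OF P])
lemma Pm: "modl P" by (rule prime_modl[OF P])
lemma Xm: "modl (pideal x)" using pideal_ideal unfolding integral_ideal_iff by blast
lemma exnz: "emb x \<noteq> 0" by (rule emb_nz[OF xnz])
lemma ex_X: "emb x \<in> pideal x" unfolding pideal_iff by (intro bexI[of _ 1]) auto
lemma ex_P: "emb x \<in> P" using ex_X XP by blast
lemma nP_nz: "s \<notin> P \<Longrightarrow> s \<noteq> 0" using prime_0[OF P] by blast
lemma good_P: "good P" by (rule P_good[OF mp xnz])

lemma L_iff: "l \<in> localization P \<longleftrightarrow> (\<exists>a s. l = a / s \<and> a \<in> Rs \<and> s \<in> Rs \<and> s \<notin> P)"
  unfolding localization_def by blast

lemma Rs_L: "r \<in> Rs \<Longrightarrow> r \<in> localization P"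
  unfolding L_iff using Rs_1 prime_1[OF P] by (intro exI[of _ r] exI[of _ 1]) simp

lemma L_mult: "l1 \<in> localization P \<Longrightarrow> l2 \<in> localization P \<Longrightarrow> l1 * l2 \<in> localization P"
proof -
  assume "l1 \<in> localization P" "l2 \<in> localization P"
  then obtain a s b t where "l1 = a / s" "a \<in> Rs" "s \<in> Rs" "s \<notin> P" "l2 = b / t" "b \<in> Rs" "t \<in> Rs" "t \<notin> P"
    unfolding L_iff by blast
  moreover have "l1 * l2 = (a * b) / (s * t)" using calculation by simp
  moreover have "s * t \<notin> P" using prime_mult[OF P] calculation by blast
  ultimately show ?thesis unfolding L_iff by (intro exI[of _ "a * b"] exI[of _ "s * t"]) auto
qed

lemma L_add: "l1 \<in> localization P \<Longrightarrow> l2 \<in> localization P \<Longrightarrow> l1 + l2 \<in> localization P"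
proof -
  assume "l1 \<in> localization P" "l2 \<in> localization P"
  then obtain a s b t where h: "l1 = a / s" "a \<in> Rs" "s \<in> Rs" "s \<notin> P" "l2 = b / t" "b \<in> Rs" "t \<in> Rs" "t \<notin> P"
    unfolding L_iff by blast
  have "s \<noteq> 0" "t \<noteq> 0" using h nP_nz by auto
  then have "l1 + l2 = (a * t + b * s) / (s * t)" using h by (simp add: field_simps)
  moreover have "s * t \<notin> P" using prime_mult[OF P] h by blast
  ultimately show ?thesis unfolding L_iff using h by (intro exI[of _ "a * t + b * s"] exI[of _ "s * t"]) auto
qed

lemma L_div: "l \<in> localization P \<Longrightarrow> s \<in> Rs \<Longrightarrow> s \<notin> P \<Longrightarrow> l / s \<in> localization P"
proof -
  assume "l \<in> localization P" and s: "s \<in> Rs" "s \<notin> P"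
  then obtain a t where h: "l = a / t" "a \<in> Rs" "t \<in> Rs" "t \<notin> P" unfolding L_iff by blast
  have "l / s = a / (t * s)" using h by simp
  moreover have "t * s \<notin> P" using prime_mult[OF P h(3) s(1) h(4) s(2)] .
  ultimately show ?thesis unfolding L_iff using h s by (intro exI[of _ a] exI[of _ "t * s"]) auto
qed

lemma I_iff: "y \<in> II \<longleftrightarrow> y \<in> Rs \<and> (\<exists>l\<in>localization P. y = emb x * l)"
  by blast

lemma I_ideal: "integral_ideal II"
  unfolding integral_ideal_iff
proof
  show "II \<subseteq> Rs" by blast
  show "modl II"
  proof (rule modlI)
    show "0 \<in> II" unfolding I_iff using Rs_L[OF Rs_0] by (intro conjI Rs_0 bexI[of _ 0]) auto
  next
    fix a b assume "a \<in> II" "b \<in> II"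
    then obtain l1 l2 where "a \<in> Rs" "b \<in> Rs" "l1 \<in> localization P" "l2 \<in> localization P" "a = emb x * l1" "b = emb x * l2"
      unfolding I_iff by blast
    then show "a + b \<in> II" unfolding I_iff using L_add by (intro conjI Rs_add bexI[of _ "l1 + l2"]) (auto simp: distrib_left)
  next
    fix r a :: "'a fract" assume r: "r \<in> Rs" and "a \<in> II"
    then obtain l where "a \<in> Rs" "l \<in> localization P" "a = emb x * l"
      unfolding I_iff by blast
    then show "r * a \<in> II" unfolding I_iff using L_mult Rs_L[OF r] r by (intro conjI Rs_mult bexI[of _ "r * l"]) (auto simp: ac_simps)
  qed
qed

lemma Im: "modl II" using I_ideal unfolding integral_ideal_iff by blast

lemma ex_I: "emb x \<in> II"
  unfolding I_iff using Rs_L[OF Rs_1] by (intro conjI emb_Rs bexI[of _ 1]) auto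

lemma X_I: "pideal x \<subseteq> II"
proof
  fix w assume "w \<in> pideal x"
  then obtain r where "r \<in> Rs" "w = emb x * r" unfolding pideal_iff by blast
  then show "w \<in> II" using modl_smult2[OF Im _ ex_I] by blast
qed

lemma I_P: "II \<subseteq> P"
proof
  fix y assume "y \<in> II"
  then obtain l where y: "y \<in> Rs" "l \<in> localization P" "y = emb x * l" unfolding I_iff by blast
  then obtain a s where h: "l = a / s" "a \<in> Rs" "s \<in> Rs" "s \<notin> P" unfolding L_iff by blast
  have "y * s = emb x * a" using y(3) h(1) nP_nz[OF h(4)] by simp
  moreover have "emb x * a \<in> P" using modl_smult2[OF Pm h(2) ex_P] .
  ultimately have "y * s \<in> P" by simp
  then show "y \<in> P" using P y(1) h(3,4) unfolding prime_ideal_def by blast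
qed

lemma I_div: "w \<in> Rs \<Longrightarrow> s \<in> Rs \<Longrightarrow> s \<notin> P \<Longrightarrow> w * s \<in> II \<Longrightarrow> w \<in> II"
proof -
  assume w: "w \<in> Rs" and s: "s \<in> Rs" "s \<notin> P" and ws: "w * s \<in> II"
  then obtain l where l: "l \<in> localization P" "w * s = emb x * l" unfolding I_iff by blast
  have "w = emb x * (l / s)" using l(2) nP_nz[OF s(2)] by (simp add: field_simps)
  moreover have "l / s \<in> localization P" by (rule L_div[OF l(1) s])
  ultimately show "w \<in> II" unfolding I_iff using w by blast
qed

lemma core_C:
  assumes pv: "PvMD TYPE('a)" and M: "prime_ideal M" "good M" "P \<subseteq> M" and y: "y \<in> II" and z: "z \<in> II"
  shows "\<exists>g. g \<in> Rs \<and> g \<notin> M \<and> (\<exists>w\<in>II. g * (y * z) = emb x * w)"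
proof -
  obtain l where l: "l \<in> localization P" "z = emb x * l" using z unfolding I_iff by blast
  then obtain b t where bt: "l = b / t" "b \<in> Rs" "t \<in> Rs" "t \<notin> P" unfolding L_iff by blast
  have tnz: "t \<noteq> 0" using nP_nz[OF bt(4)] .
  have yR: "y \<in> Rs" and yP: "y \<in> P" using y I_P by auto
  obtain f where f: "t * f \<in> Rs" "(y * b) * f \<in> Rs" "t * f \<notin> M \<or> (y * b) * f \<notin> M"
    using pvmd_trick[OF pv bt(3) Rs_mult[OF yR bt(2)] tnz M(2)] by blast
  have eq1: "t * ((y * b) * f) = y * (b * (t * f))" by (simp add: ac_simps)
  have "y * (b * (t * f)) \<in> P" using modl_smult2[OF Pm Rs_mult[OF bt(2) f(1)] yP] .
  then have "t \<in> P \<or> (y * b) * f \<in> P" using P bt(3) f(2) eq1 unfolding prime_ideal_def by metis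
  then have ybf: "(y * b) * f \<in> P" using bt(4) by blast
  then have tf: "t * f \<notin> M" using f(3) M(3) by blast
  have "y * (b * (t * f)) \<in> II" using modl_smult2[OF Im Rs_mult[OF bt(2) f(1)] y] .
  then have wI: "(y * b) * f \<in> II" using I_div[OF f(2) bt(3,4)] eq1 by (simp add: ac_simps)
  have "(t * f) * (y * z) = emb x * ((y * b) * f)" using l(2) bt(1) tnz by (simp add: field_simps)
  then show ?thesis using f(1) tf wI by blast
qed

lemma part1: "wop II = II"
proof
  show "II \<subseteq> wop II"
  proof
    fix z assume z: "z \<in> II"
    have f1: "finite {1::'a fract}" "{1::'a fract} \<subseteq> Rs" by auto
    have "1 \<in> vop (fgen {1::'a fract})" using sub_vop[OF f1(1)] by blast
    then have v: "vop (fgen {1::'a fract}) = Rs" by (rule vop_eq_Rs[OF f1])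
    have "z \<in> colon II (fgen {1})"
      unfolding colon_def using fgen_Rs[OF f1] modl_smult2[OF Im _ z] by blast
    then show "z \<in> wop II" unfolding wop_def using f1 v by blast
  qed
  show "wop II \<subseteq> II"
  proof
    fix z assume "z \<in> wop II"
    then obtain G where G: "finite G" "G \<subseteq> Rs" "vop (fgen G) = Rs" and zc: "z \<in> colon II (fgen G)"
      unfolding wop_def by blast
    have zG: "\<forall>f\<in>G. z * f \<in> II" using zc fgen_sub[OF G(1)] unfolding colon_def by blast
    have "1 \<in> vop (fgen G)" using G(3) by simp
    then have "(\<forall>f\<in>G. z * f \<in> Rs) \<longrightarrow> z * 1 \<in> Rs" unfolding vop_fgen[OF G(1)] by (rule spec)
    then have zR: "z \<in> Rs" using zG by auto
    have "\<not> G \<subseteq> P"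
    proof
      assume "G \<subseteq> P"
      then show False using good_not_sub[OF good_P G(1)] \<open>1 \<in> vop (fgen G)\<close> by blast
    qed
    then obtain g where g: "g \<in> G" "g \<notin> P" by blast
    then show "z \<in> II" using I_div[OF zR _ g(2)] zG G(2) by blast
  qed
qed

abbreviation JJ where "JJ \<equiv> iadd (pideal x) (ipow II 2)"

lemma ipow1: "ipow II (Suc 0) = II" using iprod_Rs[OF I_ideal] by simp
lemma ipow2: "ipow II 2 = iprod II II" by (simp add: numeral_2_eq_2 iprod_Rs[OF I_ideal])
lemma I2_ideal: "integral_ideal (iprod II II)" by (rule iprod_ideal[OF I_ideal]) blast
lemma I2_sub: "iprod II II \<subseteq> II"
proof (rule iprod_sub)
  show "0 \<in> II" by (rule modl_0[OF Im])
  show "\<And>a b. a \<in> II \<Longrightarrow> b \<in> II \<Longrightarrow> a + b \<in> II" by (rule modl_add[OF Im])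
  fix a b assume "a \<in> II" "b \<in> II"
  then show "a * b \<in> II" using modl_smult2[OF Im, of b a] by blast
qed
lemma J_ideal: "integral_ideal JJ" unfolding ipow2 by (rule iadd_ideal(1)[OF pideal_ideal I2_ideal])
lemma X_J: "pideal x \<subseteq> JJ" unfolding ipow2 by (rule iadd_ideal(2)[OF pideal_ideal I2_ideal])
lemma I2_J: "iprod II II \<subseteq> JJ" unfolding ipow2 by (rule iadd_ideal(3)[OF pideal_ideal I2_ideal])
lemma ex_J: "emb x \<in> JJ" using X_J ex_X by blast
lemma J_I: "JJ \<subseteq> II"
proof
  fix w assume "w \<in> JJ"
  then obtain a b where "w = a + b" "a \<in> pideal x" "b \<in> iprod II II" unfolding ipow2 iadd_iff by blast
  then show "w \<in> II" using X_I I2_sub modl_add[OF Im] by blast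
qed
lemma Jm: "modl JJ" using J_ideal unfolding integral_ideal_iff by blast
lemma AAm: "modl (iprod JJ II)" by (rule iprod_modl[OF Jm])

lemma core_W:
  assumes pv: "PvMD TYPE('a)" and y: "y \<in> II" and z: "z \<in> II"
  shows "y * z \<in> Wset (iprod JJ II)"
proof -
  define D where "D = {d. d \<in> Rs \<and> d * (y * z) \<in> iprod JJ II}"
  have yzI: "y * z \<in> II" using modl_smult2[OF Im _ y] z by blast
  have D: "integral_ideal D" unfolding integral_ideal_iff
  proof
    show "D \<subseteq> Rs" unfolding D_def by blast
    show "modl D" unfolding D_def
      by (rule modlI) (auto simp: distrib_right mult.assoc intro: modl_0[OF AAm] modl_add[OF AAm] modl_smult[OF AAm])
  qed
  show ?thesis
  proof (cases "1 \<in> tclos D")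
    case True
    then obtain F where F: "finite F" "F \<subseteq> D" "1 \<in> vop (fgen F)" unfolding tclos_iff by blast
    then show ?thesis unfolding Wset_def D_def by blast
  next
    case False
    then have "good D" using D unfolding good_def by blast
    then obtain M where M: "D \<subseteq> M" "good M" "prime_ideal M" using good_extend by blast
    show ?thesis
    proof (cases "P \<subseteq> M")
      case True
      obtain g w where g: "g \<in> Rs" "g \<notin> M" "w \<in> II" "g * (y * z) = emb x * w"
        using core_C[OF pv M(3,2) True y z] by blast
      have "emb x * w \<in> iprod JJ II" by (rule iprod_mem[OF ex_J g(3)])
      then have "g \<in> D" unfolding D_def using g by simp
      then show ?thesis using M(1) g(2) by blast
    next
      case False
      then obtain p where p: "p \<in> P" "p \<notin> M" by blast
      have pR: "p \<in> Rs" using p PR by blast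
      obtain s n where s: "s \<in> Rs" "s \<notin> P" "s * p ^ n \<in> pideal x" using key_minimal[OF mp p(1)] by blast
      have "p ^ n * s \<in> II" using s(3) X_I by (simp add: ac_simps subset_iff)
      then have pn: "p ^ n \<in> II" by (rule I_div[OF Rs_pow[OF pR] s(1,2)])
      have "p ^ n * p ^ n \<in> iprod II II" by (rule iprod_mem[OF pn pn])
      then have "(p ^ n * p ^ n) * (y * z) \<in> iprod JJ II" using I2_J yzI by (blast intro: iprod_mem)
      then have "p ^ n * p ^ n \<in> D" unfolding D_def using Rs_pow[OF pR] by auto
      moreover have "p ^ n * p ^ n \<notin> M"
        using prime_mult[OF M(3) Rs_pow[OF pR] Rs_pow[OF pR]] prime_pow_notin[OF M(3) pR p(2)] by blast
      ultimately show ?thesis using M(1) by blast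
    qed
  qed
qed

lemma part2:
  assumes pv: "PvMD TYPE('a)"
  shows "w_reduction JJ II"
proof -
  have e1: "iprod JJ (ipow II 1) = iprod JJ II" using ipow1 by simp
  have e2: "ipow II (Suc 1) = iprod II II" using ipow2 by (simp add: numeral_2_eq_2)
  have sub: "iprod JJ II \<subseteq> iprod II II"
    by (rule iprod_sub) (use J_I in \<open>auto intro: iprod_0 iprod_add iprod_mem\<close>)
  have "iprod II II \<subseteq> Wset (iprod JJ II)"
    by (rule iprod_sub) (auto intro: modl_0[OF Wset_modl[OF AAm]] modl_add[OF Wset_modl[OF AAm]] core_W[OF pv])
  then have "wop (iprod II II) \<subseteq> wop (iprod JJ II)" by (rule wop_sub_W[OF AAm])
  moreover have "wop (iprod JJ II) \<subseteq> wop (iprod II II)" by (rule wop_mono[OF sub])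
  ultimately have "wop (iprod JJ (ipow II 1)) = wop (ipow II (Suc 1))" unfolding e1 e2 by blast
  then show ?thesis unfolding w_reduction_def using J_ideal J_I by blast
qed

lemma part3:
  assumes pv: "PvMD TYPE('a)" and wb: "w_basic II"
  shows "max_t_ideal P"
proof (rule ccontr)
  assume nm: "\<not> max_t_ideal P"
  have wJ: "wop JJ = II" using wb part2[OF pv] part1 unfolding w_basic_def by blast
  have "integral_ideal P" "P \<noteq> Rs" "tclos P = P" using P P_tclos[OF mp xnz] unfolding prime_ideal_def by auto
  then obtain Q where Q: "integral_ideal Q" "Q \<noteq> Rs" "tclos Q = Q" "P \<subseteq> Q" "Q \<noteq> P"
    using nm unfolding max_t_ideal_def by blast
  have QR: "Q \<subseteq> Rs" and Qm: "modl Q" using Q(1) unfolding integral_ideal_iff by auto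
  have "1 \<notin> Q"
  proof
    assume "1 \<in> Q"
    then have "Rs \<subseteq> Q" using modl_smult2[OF Qm _ \<open>1 \<in> Q\<close>] by fastforce
    then show False using Q(2) QR by blast
  qed
  then have "good Q" using Q(1,3) unfolding good_def by simp
  then obtain M where M: "Q \<subseteq> M" "good M" "prime_ideal M" using good_extend by blast
  have Mm: "modl M" using prime_modl[OF M(3)] .
  obtain s where s: "s \<in> Q" "s \<notin> P" using Q(4,5) by blast
  have sR: "s \<in> Rs" and sM: "s \<in> M" using s QR M(1) by auto
  obtain f where f: "s * f \<in> Rs" "emb x * f \<in> Rs" "s * f \<notin> M \<or> emb x * f \<notin> M"
    using pvmd_trick[OF pv sR emb_Rs nP_nz[OF s(2)] M(2)] by blast
  have e: "s * (emb x * f) = emb x * (s * f)" by (simp add: ac_simps)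
  have "emb x * (s * f) \<in> pideal x" unfolding pideal_iff using f(1) by blast
  then have "s * (emb x * f) \<in> pideal x" by (subst e)
  then have "s * (emb x * f) \<in> P" using XP by blast
  then have "s \<in> P \<or> emb x * f \<in> P" using P sR f(2) unfolding prime_ideal_def by blast
  then have "emb x * f \<in> M" using s(2) Q(4) M(1) by blast
  then have u: "s * f \<notin> M" using f(3) by blast
  have "(emb x * f) * s \<in> II" using X_I \<open>emb x * (s * f) \<in> pideal x\<close> by (simp add: ac_simps subset_iff)
  then have "emb x * f \<in> II" by (rule I_div[OF f(2) sR s(2)])
  then have "emb x * f \<in> wop JJ" using wJ by simp
  then obtain G where G: "finite G" "G \<subseteq> Rs" "vop (fgen G) = Rs" and vc: "emb x * f \<in> colon JJ (fgen G)"
    unfolding wop_def by blast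
  have "\<not> G \<subseteq> M"
  proof
    assume "G \<subseteq> M"
    moreover have "1 \<in> vop (fgen G)" using G(3) by simp
    ultimately show False using good_not_sub[OF M(2) G(1)] by blast
  qed
  then obtain g where g: "g \<in> G" "g \<notin> M" by blast
  have gR: "g \<in> Rs" using g G(2) by blast
  have vg: "(emb x * f) * g \<in> JJ" using vc fgen_sub[OF G(1)] g(1) unfolding colon_def by blast
  define \<Phi> where "\<Phi> = {w. \<exists>h. h \<in> Rs \<and> h \<notin> M \<and> h * w \<in> pideal x}"
  have \<Phi>add: "w1 + w2 \<in> \<Phi>" if w1: "w1 \<in> \<Phi>" and w2: "w2 \<in> \<Phi>" for w1 w2
  proof -
    obtain h1 where h1: "h1 \<in> Rs" "h1 \<notin> M" "h1 * w1 \<in> pideal x"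
      using w1 unfolding \<Phi>_def by blast
    obtain h2 where h2: "h2 \<in> Rs" "h2 \<notin> M" "h2 * w2 \<in> pideal x"
      using w2 unfolding \<Phi>_def by blast
    have eq: "(h1 * h2) * (w1 + w2) = h2 * (h1 * w1) + h1 * (h2 * w2)" by (simp add: algebra_simps)
    have "h2 * (h1 * w1) + h1 * (h2 * w2) \<in> pideal x"
      by (rule modl_add[OF Xm modl_smult[OF Xm h2(1) h1(3)] modl_smult[OF Xm h1(1) h2(3)]])
    then have m: "(h1 * h2) * (w1 + w2) \<in> pideal x" unfolding eq .
    have n: "h1 * h2 \<notin> M" using prime_mult[OF M(3) h1(1) h2(1) h1(2) h2(2)] .
    have r: "h1 * h2 \<in> Rs" using Rs_mult[OF h1(1) h2(1)] .
    show ?thesis unfolding \<Phi>_def using m n r by blast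
  qed
  have X\<Phi>: "pideal x \<subseteq> \<Phi>"
  proof
    fix w assume "w \<in> pideal x"
    then show "w \<in> \<Phi>" unfolding \<Phi>_def using Rs_1 prime_1[OF M(3)] by (intro CollectI exI[of _ 1]) simp
  qed
  have PM: "P \<subseteq> M" using Q(4) M(1) by blast
  have I2\<Phi>: "iprod II II \<subseteq> \<Phi>"
  proof (rule iprod_sub)
    show "0 \<in> \<Phi>" using X\<Phi> modl_0[OF Xm] by blast
    show "\<And>a b. a \<in> \<Phi> \<Longrightarrow> b \<in> \<Phi> \<Longrightarrow> a + b \<in> \<Phi>" by (rule \<Phi>add)
    fix y z assume "y \<in> II" "z \<in> II"
    then obtain h w where h: "h \<in> Rs" "h \<notin> M" "w \<in> II" "h * (y * z) = emb x * w"
      using core_C[OF pv M(3,2) PM] by blast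
    have "emb x * w \<in> pideal x" unfolding pideal_iff using h(3) by blast
    then show "y * z \<in> \<Phi>" unfolding \<Phi>_def using h by (intro CollectI exI[of _ h]) simp
  qed
  have "JJ \<subseteq> \<Phi>"
  proof
    fix w assume "w \<in> JJ"
    then obtain a b where "w = a + b" "a \<in> pideal x" "b \<in> iprod II II" unfolding ipow2 iadd_iff by blast
    then show "w \<in> \<Phi>" using \<Phi>add X\<Phi> I2\<Phi> by blast
  qed
  then obtain h where h: "h \<in> Rs" "h \<notin> M" "h * ((emb x * f) * g) \<in> pideal x" using vg unfolding \<Phi>_def by blast
  then obtain r where r: "r \<in> Rs" "h * ((emb x * f) * g) = emb x * r" unfolding pideal_iff by blast
  have "emb x * (h * f * g) = emb x * r" using r(2) by (simp add: ac_simps)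
  then have hfg: "h * f * g = r" using exnz by simp
  have "r * s \<in> M" using modl_smult[OF Mm r(1) sM] by (simp add: ac_simps)
  moreover have "r * s = h * g * (s * f)" using hfg[symmetric] by (simp add: ac_simps)
  moreover have "h * g * (s * f) \<notin> M"
    using prime_mult[OF M(3) Rs_mult[OF h(1) gR] f(1) prime_mult[OF M(3) h(1) gR h(2) g(2)] u] .
  ultimately show False by simp
qed

end

theorem lemma2p3:
  fixes x :: "'a::idom" and P :: "'a fract set"
  assumes "PvMD TYPE('a)"
    and "x \<noteq> 0"
    and "minimal_prime_over P (pideal x)"
  defines "I \<equiv> ((\<lambda>y. emb x * y) ` localization P) \<inter> Rs"
  shows "wop I = I \<and> w_reduction (iadd (pideal x) (ipow I 2)) I
         \<and> (w_basic I \<longrightarrow> max_t_ideal P)"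
proof -
  interpret lsetup x P using assms(2,3) by unfold_locales
  show ?thesis unfolding I_def using part1 part2[OF assms(1)] part3[OF assms(1)] by blast
qed

end
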